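(* The family $\mathcal{T}_{\mathcal{M}3}$ of all finite trees having at least two vertices and all of whose vertices have order at most $3$, together with all monotone epimorphisms between them, has the joint projection property and the projective amalgamation property. That is: (JPP) for any $B,C\in\mathcal{T}_{\mathcal{M}3}$ there are $D\in\mathcal{T}_{\mathcal{M}3}$ and monotone epimorphisms $D\to B$, $D\to C$; (AP) for any $A,B,C\in\mathcal{T}_{\mathcal{M}3}$ and monotone epimorphisms $f\colon B\to A$, $g\colon C\to A$ there are $D\in\mathcal{T}_{\mathcal{M}3}$ and monotone epimorphisms $f_0\colon D\to B$, $g_0\colon D\to C$ with $f\circ f_0=g\circ g_0$.
   Context: A graph is a pair $A=(V(A),E(A))$ with $E(A)\subseteq V(A)^2$ reflexive and symmetric; edges $\langle a,a\rangle$ are called degenerate. A homomorphism $f\colon A\to B$ is a map $V(A)\to V(B)$ sending edges to edges; an epimorphism is a homomorphism that is surjective on vertices and on edges (every edge of $B$ is the image of an edge of $A$). A tree is a finite graph $T$ such that any two distinct vertices $a,b$ are joined by a unique sequence $a=v_0,\dots,v_n=b$ of pairwise distinct vertices with $\langle v_i,v_{i+1}\rangle\in E(T)$. The order of a vertex is the number of non-degenerate edges containing it. A set $S\subseteq V(G)$ is disconnected if $S=P\cup Q$ with $P,Q$ nonempty, disjoint, closed, and no edge $\langle a,b\rangle\in E(G)$ with $a\in P$, $b\in Q$; otherwise $S$ is connected. An epimorphism $f\colon G\to H$ is monotone if the preimage of every (closed) connected subset of $V(H)$ is connected. *)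

theory Defs
  imports Main
begin

type_synonym 'a graph = "'a set \<times> ('a \<times> 'a) set"

definition verts :: "'a graph \<Rightarrow> 'a set" where "verts G = fst G"
definition edges :: "'a graph \<Rightarrow> ('a \<times> 'a) set" where "edges G = snd G"

definition is_graph :: "'a graph \<Rightarrow> bool" where
  "is_graph G \<longleftrightarrow> edges G \<subseteq> verts G \<times> verts G
     \<and> (\<forall>a\<in>verts G. (a, a) \<in> edges G)
     \<and> (\<forall>a b. (a, b) \<in> edges G \<longrightarrow> (b, a) \<in> edges G)"

definition graph_hom :: "('a \<Rightarrow> 'b) \<Rightarrow> 'a graph \<Rightarrow> 'b graph \<Rightarrow> bool" where
  "graph_hom f A B \<longleftrightarrow> f ` verts A \<subseteq> verts B
     \<and> (\<forall>(a, b)\<in>edges A. (f a, f b) \<in> edges B)"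

definition graph_epi :: "('a \<Rightarrow> 'b) \<Rightarrow> 'a graph \<Rightarrow> 'b graph \<Rightarrow> bool" where
  "graph_epi f A B \<longleftrightarrow> graph_hom f A B \<and> f ` verts A = verts B
     \<and> (\<lambda>(a, b). (f a, f b)) ` edges A = edges B"

definition is_path :: "'a graph \<Rightarrow> 'a \<Rightarrow> 'a \<Rightarrow> 'a list \<Rightarrow> bool" where
  "is_path G a b vs \<longleftrightarrow> vs \<noteq> [] \<and> hd vs = a \<and> last vs = b \<and> distinct vs
     \<and> set vs \<subseteq> verts G
     \<and> (\<forall>i. Suc i < length vs \<longrightarrow> (vs ! i, vs ! Suc i) \<in> edges G)"

definition is_tree :: "'a graph \<Rightarrow> bool" where
  "is_tree T \<longleftrightarrow> is_graph T \<and> finite (verts T)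
     \<and> (\<forall>a\<in>verts T. \<forall>b\<in>verts T. a \<noteq> b \<longrightarrow> (\<exists>!vs. is_path T a b vs))"

definition vorder :: "'a graph \<Rightarrow> 'a \<Rightarrow> nat" where
  "vorder G a = card {b. (a, b) \<in> edges G \<and> b \<noteq> a}"

text \<open>Connectedness of a vertex set (finite graphs: all sets are closed).\<close>
definition set_connected :: "'a graph \<Rightarrow> 'a set \<Rightarrow> bool" where
  "set_connected G S \<longleftrightarrow> \<not> (\<exists>P Q. P \<noteq> {} \<and> Q \<noteq> {} \<and> P \<inter> Q = {} \<and> S = P \<union> Q
      \<and> \<not> (\<exists>a\<in>P. \<exists>b\<in>Q. (a, b) \<in> edges G))"

definition monotone_epi :: "('a \<Rightarrow> 'b) \<Rightarrow> 'a graph \<Rightarrow> 'b graph \<Rightarrow> bool" where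
  "monotone_epi f G H \<longleftrightarrow> graph_epi f G H
     \<and> (\<forall>S\<subseteq>verts H. set_connected H S \<longrightarrow> set_connected G (f -` S \<inter> verts G))"

definition in_TM3 :: "'a graph \<Rightarrow> bool" where
  "in_TM3 T \<longleftrightarrow> is_tree T \<and> card (verts T) \<ge> 2 \<and> (\<forall>a\<in>verts T. vorder T a \<le> 3)"

end

theory Submission
  imports Defs
begin


lemma verts_pair[simp]: "verts (V, E) = V" by (simp add: verts_def)
lemma edges_pair[simp]: "edges (V, E) = E" by (simp add: edges_def)

lemma graph_sym: "is_graph G \<Longrightarrow> (a, b) \<in> edges G \<Longrightarrow> (b, a) \<in> edges G"
  by (simp add: is_graph_def)
lemma graph_refl: "is_graph G \<Longrightarrow> a \<in> verts G \<Longrightarrow> (a, a) \<in> edges G"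
  by (simp add: is_graph_def)
lemma graph_V1: "is_graph G \<Longrightarrow> (a, b) \<in> edges G \<Longrightarrow> a \<in> verts G"
  by (auto simp add: is_graph_def)
lemma graph_V2: "is_graph G \<Longrightarrow> (a, b) \<in> edges G \<Longrightarrow> b \<in> verts G"
  by (auto simp add: is_graph_def)

lemma path_aa:
  assumes "is_path G a a vs" shows "vs = [a]"
proof (cases vs)
  case Nil then show ?thesis using assms by (simp add: is_path_def)
next
  case (Cons x ys)
  show ?thesis
  proof (cases ys)
    case Nil then show ?thesis using assms Cons by (simp add: is_path_def)
  next
    case (Cons z zs)
    have "last vs \<in> set ys" using \<open>vs = x # ys\<close> Cons by simp
    moreover have "hd vs = x" using \<open>vs = x # ys\<close> by simp
    ultimately show ?thesis using assms \<open>vs = x # ys\<close> by (auto simp: is_path_def)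
  qed
qed

lemma path_single: "a \<in> verts G \<Longrightarrow> is_path G a a [a]"
  by (simp add: is_path_def)

lemma path_edge: "(a, b) \<in> edges G \<Longrightarrow> a \<noteq> b \<Longrightarrow> a \<in> verts G \<Longrightarrow> b \<in> verts G
  \<Longrightarrow> is_path G a b [a, b]"
  by (auto simp add: is_path_def less_Suc_eq)

lemma path_append:
  assumes "is_path G a b xs" "is_path G c d ys" "(b, c) \<in> edges G" "set xs \<inter> set ys = {}"
  shows "is_path G a d (xs @ ys)"
  unfolding is_path_def
proof (intro conjI allI impI)
  show "xs @ ys \<noteq> []" using assms(1) by (simp add: is_path_def)
  show "hd (xs @ ys) = a" using assms(1) by (simp add: is_path_def)
  show "last (xs @ ys) = d" using assms(2) by (simp add: is_path_def)
  show "distinct (xs @ ys)" using assms by (simp add: is_path_def)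
  show "set (xs @ ys) \<subseteq> verts G" using assms by (simp add: is_path_def)
  fix i assume i: "Suc i < length (xs @ ys)"
  consider "Suc i < length xs" | "Suc i = length xs" | "Suc i > length xs" by linarith
  then show "((xs @ ys) ! i, (xs @ ys) ! Suc i) \<in> edges G"
  proof cases
    case 1 then show ?thesis using assms(1) by (simp add: nth_append is_path_def)
  next
    case 2
    have "xs \<noteq> []" using 2 by auto
    moreover have "i = length xs - 1" using 2 by simp
    ultimately have "xs ! i = last xs" by (simp add: last_conv_nth)
    moreover have "ys \<noteq> []" "hd ys = c" using assms(2) by (simp_all add: is_path_def)
    then have "ys ! 0 = c" by (metis hd_conv_nth)
    ultimately show ?thesis using 2 assms by (simp add: nth_append is_path_def)
  next
    case 3
    then have "Suc (i - length xs) < length ys" using i by simp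
    then have "(ys ! (i - length xs), ys ! Suc (i - length xs)) \<in> edges G"
      using assms(2) by (simp add: is_path_def)
    moreover have "Suc i - length xs = Suc (i - length xs)" using 3 by simp
    ultimately show ?thesis using 3 by (simp add: nth_append)
  qed
qed

lemma path_snoc:
  assumes "is_path G a b xs" "(b, c) \<in> edges G" "c \<notin> set xs" "c \<in> verts G"
  shows "is_path G a c (xs @ [c])"
  using path_append[OF assms(1) path_single[OF assms(4)] assms(2)] assms(3) by simp

lemma path_rev:
  assumes "is_graph G" "is_path G a b vs" shows "is_path G b a (rev vs)"
  unfolding is_path_def
proof (intro conjI allI impI)
  show "rev vs \<noteq> []" "hd (rev vs) = b" "last (rev vs) = a" "distinct (rev vs)" "set (rev vs) \<subseteq> verts G"
    using assms(2) by (auto simp: is_path_def hd_rev last_rev)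
  fix i assume i: "Suc i < length (rev vs)"
  let ?n = "length vs"
  define j where "j = ?n - 2 - i"
  have "Suc j < ?n" using i by (simp add: j_def)
  then have "(vs ! j, vs ! Suc j) \<in> edges G" using assms(2) unfolding is_path_def by blast
  moreover have "Suc j = ?n - Suc i" using i by (simp add: j_def)
  moreover have "j = ?n - Suc (Suc i)" by (simp add: j_def)
  ultimately have "(vs ! (?n - Suc (Suc i)), vs ! (?n - Suc i)) \<in> edges G" by (simp only:)
  then have "(vs ! (?n - Suc i), vs ! (?n - Suc (Suc i))) \<in> edges G"
    by (rule graph_sym[OF assms(1)])
  then show "(rev vs ! i, rev vs ! Suc i) \<in> edges G"
    using i by (simp add: rev_nth)
qed

lemma path_take:
  assumes "is_path G a b vs" "i < length vs"
  shows "is_path G a (vs ! i) (take (Suc i) vs)"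
  unfolding is_path_def
proof (intro conjI allI impI)
  show "take (Suc i) vs \<noteq> []" "hd (take (Suc i) vs) = a" using assms by (auto simp: is_path_def)
  have "take (Suc i) vs \<noteq> []" using assms by (auto simp: is_path_def)
  then have "last (take (Suc i) vs) = take (Suc i) vs ! (length (take (Suc i) vs) - 1)" by (rule last_conv_nth)
  then show "last (take (Suc i) vs) = vs ! i" using assms by simp
  show "distinct (take (Suc i) vs)" "set (take (Suc i) vs) \<subseteq> verts G"
    using assms by (auto simp: is_path_def dest: in_set_takeD)
  fix j assume "Suc j < length (take (Suc i) vs)"
  then show "(take (Suc i) vs ! j, take (Suc i) vs ! Suc j) \<in> edges G"
    using assms unfolding is_path_def by auto
qed

lemma path_drop:
  assumes "is_path G a b vs" "i < length vs"
  shows "is_path G (vs ! i) b (drop i vs)"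
  unfolding is_path_def
proof (intro conjI allI impI)
  show "drop i vs \<noteq> []" "hd (drop i vs) = vs ! i" using assms by (auto simp: is_path_def hd_drop_conv_nth)
  show "last (drop i vs) = b" using assms by (auto simp: is_path_def)
  show "distinct (drop i vs)" "set (drop i vs) \<subseteq> verts G"
    using assms by (auto simp: is_path_def dest: in_set_dropD)
  fix j assume "Suc j < length (drop i vs)"
  then show "(drop i vs ! j, drop i vs ! Suc j) \<in> edges G"
    using assms unfolding is_path_def by auto
qed

lemma path_interior:
  assumes "is_graph G" "is_path G a b vs" "0 < i" "Suc i < length vs"
  shows "(vs ! i, vs ! (i - 1)) \<in> edges G" "(vs ! i, vs ! Suc i) \<in> edges G"
    "vs ! (i - 1) \<noteq> vs ! Suc i" "vs ! (i - 1) \<noteq> vs ! i" "vs ! Suc i \<noteq> vs ! i"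
proof -
  have d: "distinct vs" using assms(2) by (simp add: is_path_def)
  have "Suc (i - 1) < length vs" using assms by simp
  then have "(vs ! (i - 1), vs ! Suc (i - 1)) \<in> edges G" using assms(2) unfolding is_path_def by blast
  then have "(vs ! (i - 1), vs ! i) \<in> edges G" using assms(3) by simp
  then show "(vs ! i, vs ! (i - 1)) \<in> edges G" by (rule graph_sym[OF assms(1)])
  show "(vs ! i, vs ! Suc i) \<in> edges G" using assms by (simp add: is_path_def)
  show "vs ! (i - 1) \<noteq> vs ! Suc i" "vs ! (i - 1) \<noteq> vs ! i" "vs ! Suc i \<noteq> vs ! i"
    using d assms(3,4) by (simp_all add: nth_eq_iff_index_eq)
qed

lemma no_interior:
  assumes "is_graph G" "is_path G a b vs" "y \<in> set vs" "y \<noteq> a" "y \<noteq> b"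
    "\<And>z. (y, z) \<in> edges G \<Longrightarrow> z = y \<or> z = x"
  shows False
proof -
  obtain i where i: "i < length vs" "vs ! i = y" using assms(3) by (auto simp: in_set_conv_nth)
  have "vs \<noteq> []" "hd vs = a" using assms(2) by (auto simp: is_path_def)
  then have "hd vs = vs ! 0" by (simp add: hd_conv_nth)
  then have "i \<noteq> 0" using assms(4) i \<open>hd vs = a\<close> by (metis)
  moreover have "Suc i \<noteq> length vs"
  proof
    assume "Suc i = length vs"
    then have "i = length vs - 1" by simp
    then have "vs ! i = last vs" using \<open>vs \<noteq> []\<close> by (simp add: last_conv_nth)
    then show False using assms(2,5) i by (simp add: is_path_def)
  qed
  ultimately have "0 < i" "Suc i < length vs" using i by auto
  note pi = path_interior[OF assms(1,2) this]
  have e1: "(y, vs ! (i - 1)) \<in> edges G" "(y, vs ! Suc i) \<in> edges G" using pi(1,2) i(2) by simp_all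
  have "vs ! (i - 1) = x" using assms(6)[OF e1(1)] pi(4) i(2) by auto
  moreover have "vs ! Suc i = x" using assms(6)[OF e1(2)] pi(5) i(2) by auto
  ultimately show False using pi(3) by simp
qed

lemma path_mono:
  assumes "is_path G a b vs" "verts G \<subseteq> verts H" "edges G \<subseteq> edges H"
  shows "is_path H a b vs"
  using assms unfolding is_path_def by blast

lemma is_treeI:
  assumes "is_graph T" "finite (verts T)"
    "\<And>a b. a \<in> verts T \<Longrightarrow> b \<in> verts T \<Longrightarrow> a \<noteq> b \<Longrightarrow> \<exists>vs. is_path T a b vs"
    "\<And>a b vs ws. a \<noteq> b \<Longrightarrow> is_path T a b vs \<Longrightarrow> is_path T a b ws \<Longrightarrow> vs = ws"
  shows "is_tree T"
  unfolding is_tree_def using assms by blast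

lemma tree_graph: "is_tree T \<Longrightarrow> is_graph T" by (simp add: is_tree_def)
lemma tree_finite: "is_tree T \<Longrightarrow> finite (verts T)" by (simp add: is_tree_def)
lemma tree_path_ex: "is_tree T \<Longrightarrow> a \<in> verts T \<Longrightarrow> b \<in> verts T \<Longrightarrow> a \<noteq> b \<Longrightarrow> \<exists>vs. is_path T a b vs"
  unfolding is_tree_def by blast
lemma tree_path_uniq: "is_tree T \<Longrightarrow> a \<noteq> b \<Longrightarrow> is_path T a b vs \<Longrightarrow> is_path T a b ws \<Longrightarrow> vs = ws"
proof -
  assume a: "is_tree T" "a \<noteq> b" "is_path T a b vs" "is_path T a b ws"
  have "a \<in> verts T" "b \<in> verts T" using a(3) unfolding is_path_def by (auto dest: hd_in_set last_in_set)
  then show "vs = ws" using a unfolding is_tree_def by blast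
qed

lemma tree_no_triangle:
  assumes "is_tree T" "(u, v) \<in> edges T" "(v, w) \<in> edges T" "(u, w) \<in> edges T"
    "u \<noteq> v" "v \<noteq> w" "u \<noteq> w"
  shows False
proof -
  have g: "is_graph T" using assms(1) by (rule tree_graph)
  have "is_path T u w [u, w]" using assms g by (auto intro!: path_edge dest: graph_V1 graph_V2)
  moreover have "is_path T u w [u, v, w]"
    using assms g by (auto simp: is_path_def less_Suc_eq dest: graph_V1 graph_V2)
  ultimately show False using tree_path_uniq[OF assms(1) assms(7)] by fastforce
qed



lemma sc_single: "set_connected G {a}"
proof -
  have "\<not> (P \<noteq> {} \<and> Q \<noteq> {} \<and> P \<inter> Q = {} \<and> {a} = P \<union> Q)" for P Q
  proof
    assume h: "P \<noteq> {} \<and> Q \<noteq> {} \<and> P \<inter> Q = {} \<and> {a} = P \<union> Q"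
    then have ne: "P \<noteq> {}" "Q \<noteq> {}" and d: "P \<inter> Q = {}" and e: "P \<union> Q = {a}" by auto
    then obtain p q where pq: "p \<in> P" "q \<in> Q" by blast
    then have "p = a" "q = a" using e by blast+
    then show False using d pq by blast
  qed
  then show ?thesis unfolding set_connected_def by blast
qed

lemma sc_empty: "set_connected G {}"
  unfolding set_connected_def by auto

lemma sc_split:
  assumes "set_connected G S" "S \<subseteq> P \<union> Q" "P \<inter> Q = {}"
    "\<not> (\<exists>a\<in>P. \<exists>b\<in>Q. (a, b) \<in> edges G)"
  shows "S \<subseteq> P \<or> S \<subseteq> Q"
proof (rule ccontr)
  assume "\<not> (S \<subseteq> P \<or> S \<subseteq> Q)"
  then have "S \<inter> P \<noteq> {}" "S \<inter> Q \<noteq> {}" using assms(2) by auto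
  moreover have "S = (S \<inter> P) \<union> (S \<inter> Q)" using assms(2) by auto
  moreover have "(S \<inter> P) \<inter> (S \<inter> Q) = {}" using assms(3) by auto
  moreover have "\<not> (\<exists>a\<in>S \<inter> P. \<exists>b\<in>S \<inter> Q. (a, b) \<in> edges G)" using assms(4) by auto
  ultimately have "\<exists>P' Q'. P' \<noteq> {} \<and> Q' \<noteq> {} \<and> P' \<inter> Q' = {} \<and> S = P' \<union> Q'
      \<and> \<not> (\<exists>a\<in>P'. \<exists>b\<in>Q'. (a, b) \<in> edges G)"
    by (intro exI[of _ "S \<inter> P"] exI[of _ "S \<inter> Q"]) simp
  then show False using assms(1) unfolding set_connected_def by simp
qed

lemma sc_disconnI:
  assumes "P \<noteq> {}" "Q \<noteq> {}" "P \<inter> Q = {}" "S = P \<union> Q"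
    "\<forall>a\<in>P. \<forall>b\<in>Q. (a, b) \<notin> edges G"
  shows "\<not> set_connected G S"
proof -
  have "\<exists>P Q. P \<noteq> {} \<and> Q \<noteq> {} \<and> P \<inter> Q = {} \<and> S = P \<union> Q
      \<and> \<not> (\<exists>a\<in>P. \<exists>b\<in>Q. (a, b) \<in> edges G)"
    using assms by (intro exI[of _ P] exI[of _ Q]) simp
  then show ?thesis unfolding set_connected_def by simp
qed

lemma sc_disconnE:
  assumes "\<not> set_connected G S"
  obtains P Q where "P \<noteq> {}" "Q \<noteq> {}" "P \<inter> Q = {}" "S = P \<union> Q"
    "\<forall>a\<in>P. \<forall>b\<in>Q. (a, b) \<notin> edges G"
proof -
  from assms obtain P Q where "P \<noteq> {} \<and> Q \<noteq> {} \<and> P \<inter> Q = {} \<and> S = P \<union> Q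
      \<and> \<not> (\<exists>a\<in>P. \<exists>b\<in>Q. (a, b) \<in> edges G)" unfolding set_connected_def by auto
  then show ?thesis using that by auto
qed

lemma sc_union:
  assumes "set_connected G S1" "set_connected G S2" "a \<in> S1" "b \<in> S2" "(a, b) \<in> edges G"
    "(b, a) \<in> edges G"
  shows "set_connected G (S1 \<union> S2)"
proof (rule ccontr)
  assume "\<not> set_connected G (S1 \<union> S2)"
  then obtain P Q where pq: "P \<noteq> {}" "Q \<noteq> {}" "P \<inter> Q = {}" "S1 \<union> S2 = P \<union> Q"
    "\<forall>a\<in>P. \<forall>b\<in>Q. (a, b) \<notin> edges G" by (rule sc_disconnE)
  have ne: "\<not> (\<exists>a\<in>P. \<exists>b\<in>Q. (a, b) \<in> edges G)" using pq(5) by blast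
  have s1: "S1 \<subseteq> P \<union> Q" "S2 \<subseteq> P \<union> Q" using pq(4) by blast+
  have 1: "S1 \<subseteq> P \<or> S1 \<subseteq> Q" by (rule sc_split[OF assms(1) s1(1) pq(3) ne])
  have 2: "S2 \<subseteq> P \<or> S2 \<subseteq> Q" by (rule sc_split[OF assms(2) s1(2) pq(3) ne])
  show False
  proof (cases "S1 \<subseteq> P")
    case True
    show False
    proof (cases "S2 \<subseteq> P")
      case True then have "Q \<subseteq> P" using \<open>S1 \<subseteq> P\<close> pq(4) by blast
      then show False using pq(2,3) by blast
    next
      case False then have "S2 \<subseteq> Q" using 2 by blast
      then have "a \<in> P" "b \<in> Q" using True assms(3,4) by blast+
      then show False using assms(5) pq(5) by blast
    qed
  next
    case False then have q1: "S1 \<subseteq> Q" using 1 by blast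
    show False
    proof (cases "S2 \<subseteq> Q")
      case True then have "P \<subseteq> Q" using q1 pq(4) by blast
      then show False using pq(1,3) by blast
    next
      case False then have "S2 \<subseteq> P" using 2 by blast
      then have "b \<in> P" "a \<in> Q" using q1 assms(3,4) by blast+
      then show False using assms(6) pq(5) by blast
    qed
  qed
qed

lemma sc_mono_edges:
  assumes "set_connected G S" "\<And>a b. a \<in> S \<Longrightarrow> b \<in> S \<Longrightarrow> (a, b) \<in> edges G \<Longrightarrow> (a, b) \<in> edges H"
  shows "set_connected H S"
proof (rule ccontr)
  assume "\<not> set_connected H S"
  then obtain P Q where pq: "P \<noteq> {}" "Q \<noteq> {}" "P \<inter> Q = {}" "S = P \<union> Q"
    "\<forall>a\<in>P. \<forall>b\<in>Q. (a, b) \<notin> edges H" by (rule sc_disconnE)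
  have ne: "\<forall>a\<in>P. \<forall>b\<in>Q. (a, b) \<notin> edges G"
  proof (intro ballI notI)
    fix a b assume ab: "a \<in> P" "b \<in> Q" "(a, b) \<in> edges G"
    then have "a \<in> S" "b \<in> S" using pq(4) by simp_all
    then have "(a, b) \<in> edges H" using assms(2) ab(3) by simp
    then show False using pq(5) ab(1,2) by simp
  qed
  have "\<not> set_connected G S" by (rule sc_disconnI[OF pq(1-4) ne])
  then show False using assms(1) by simp
qed

lemma sc_image:
  assumes "set_connected G S" "\<And>a b. a \<in> S \<Longrightarrow> b \<in> S \<Longrightarrow> (a, b) \<in> edges G \<Longrightarrow> (r a, r b) \<in> edges H"
  shows "set_connected H (r ` S)"
proof (rule ccontr)
  assume "\<not> set_connected H (r ` S)"
  then obtain P Q where pq: "P \<noteq> {}" "Q \<noteq> {}" "P \<inter> Q = {}" "r ` S = P \<union> Q"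
    "\<forall>a\<in>P. \<forall>b\<in>Q. (a, b) \<notin> edges H" by (rule sc_disconnE)
  let ?P = "S \<inter> r -` P" and ?Q = "S \<inter> r -` Q"
  have "?P \<noteq> {}"
  proof -
    obtain p where "p \<in> P" using pq(1) by auto
    then have "p \<in> r ` S" using pq(4) by simp
    then obtain x where "x \<in> S" "r x = p" by auto
    then show ?thesis using \<open>p \<in> P\<close> by auto
  qed
  moreover have "?Q \<noteq> {}"
  proof -
    obtain p where "p \<in> Q" using pq(2) by auto
    then have "p \<in> r ` S" using pq(4) by simp
    then obtain x where "x \<in> S" "r x = p" by auto
    then show ?thesis using \<open>p \<in> Q\<close> by auto
  qed
  moreover have "?P \<inter> ?Q = {}" using pq(3) by auto
  moreover have "S = ?P \<union> ?Q"
  proof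
    show "S \<subseteq> ?P \<union> ?Q"
    proof
      fix x assume "x \<in> S"
      then have "r x \<in> P \<union> Q" using pq(4) by (metis imageI)
      then show "x \<in> ?P \<union> ?Q" using \<open>x \<in> S\<close> by auto
    qed
  qed auto
  moreover have "\<forall>a\<in>?P. \<forall>b\<in>?Q. (a, b) \<notin> edges G"
  proof (intro ballI notI)
    fix a b assume ab: "a \<in> ?P" "b \<in> ?Q" "(a, b) \<in> edges G"
    then have "(r a, r b) \<in> edges H" using assms(2) by simp
    then show False using pq(5) ab(1,2) by simp
  qed
  ultimately have "\<not> set_connected G S" by (rule sc_disconnI)
  then show False using assms(1) by simp
qed

lemma tree_connected:
  assumes "is_tree T" shows "set_connected T (verts T)"
proof (rule ccontr)
  assume "\<not> set_connected T (verts T)"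
  then obtain P Q where pq: "P \<noteq> {}" "Q \<noteq> {}" "P \<inter> Q = {}" "verts T = P \<union> Q"
    "\<forall>a\<in>P. \<forall>b\<in>Q. (a, b) \<notin> edges T" by (rule sc_disconnE)
  obtain p q where p: "p \<in> P" and q: "q \<in> Q" using pq(1,2) by blast
  have "p \<noteq> q" using p q pq(3) by blast
  then obtain vs where vs: "is_path T p q vs" using tree_path_ex[OF assms] p q pq(4) by blast
  have ne: "vs \<noteq> []" and h: "hd vs = p" and l: "last vs = q" and sv: "set vs \<subseteq> verts T"
    and ed: "\<And>i. Suc i < length vs \<Longrightarrow> (vs ! i, vs ! Suc i) \<in> edges T"
    using vs unfolding is_path_def by auto
  have ex: "\<exists>k. k < length vs \<and> vs ! k \<in> Q"
    using ne l q by (intro exI[of _ "length vs - 1"]) (simp add: last_conv_nth)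
  define k where "k = (LEAST k. k < length vs \<and> vs ! k \<in> Q)"
  have k: "k < length vs" "vs ! k \<in> Q" using LeastI_ex[OF ex] unfolding k_def by auto
  have "vs ! 0 = p" using ne h by (simp add: hd_conv_nth)
  then have "k \<noteq> 0" using k(2) p pq(3) by auto
  then have k1: "\<not> (k - 1 < length vs \<and> vs ! (k - 1) \<in> Q)"
    using not_less_Least[of "k - 1" "\<lambda>k. k < length vs \<and> vs ! k \<in> Q"] unfolding k_def[symmetric] by simp
  have "vs ! (k - 1) \<in> set vs" using k(1) by simp
  moreover have "k - 1 < length vs" using k(1) by simp
  ultimately have "vs ! (k - 1) \<in> P" using k1 sv pq(4) by blast
  moreover have "(vs ! (k - 1), vs ! k) \<in> edges T" using ed[of "k - 1"] k(1) \<open>k \<noteq> 0\<close> by simp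
  ultimately show False using pq(5) k(2) by blast
qed

lemma connected_path:
  assumes "set_connected G S" "S \<subseteq> verts G" "a \<in> S" "b \<in> S"
  shows "\<exists>vs. is_path G a b vs \<and> set vs \<subseteq> S"
proof (rule ccontr)
  assume nb: "\<not> ?thesis"
  define R where "R = {x \<in> S. \<exists>vs. is_path G a x vs \<and> set vs \<subseteq> S}"
  have "is_path G a a [a]" using assms(2,3) by (auto intro: path_single)
  then have aR: "a \<in> R" unfolding R_def using assms(3) by auto
  have bR: "b \<in> S - R" unfolding R_def using nb assms(4) by auto
  have "\<not> set_connected G S"
  proof (rule sc_disconnI[of R "S - R"])
    show "R \<noteq> {}" "S - R \<noteq> {}" using aR bR by auto
    show "R \<inter> (S - R) = {}" by auto
    show "S = R \<union> (S - R)" unfolding R_def by auto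
    show "\<forall>x\<in>R. \<forall>y\<in>S - R. (x, y) \<notin> edges G"
    proof (intro ballI)
    fix x y assume x: "x \<in> R" and y: "y \<in> S - R"
    show "(x, y) \<notin> edges G"
    proof
      assume e: "(x, y) \<in> edges G"
      obtain vs where vs: "is_path G a x vs" "set vs \<subseteq> S" using x unfolding R_def by auto
      show False
      proof (cases "y \<in> set vs")
        case True
        then obtain i where i: "i < length vs" "vs ! i = y" by (auto simp: in_set_conv_nth)
        have "is_path G a y (take (Suc i) vs)" using path_take[OF vs(1) i(1)] i(2) by simp
        moreover have "set (take (Suc i) vs) \<subseteq> S" using vs(2) by (meson order_trans set_take_subset)
        ultimately show False using y unfolding R_def by auto
      next
        case False
        have "is_path G a y (vs @ [y])" using path_snoc[OF vs(1) e False] y assms(2) by auto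
        moreover have "set (vs @ [y]) \<subseteq> S" using vs(2) y by auto
        ultimately show False using y unfolding R_def by blast
      qed
    qed
    qed
  qed
  then show False using assms(1) by simp
qed

lemma connected_edge:
  assumes "set_connected G S" "a \<in> S" "b \<in> S" "a \<noteq> b"
  shows "\<exists>c \<in> S. c \<noteq> a \<and> (a, c) \<in> edges G"
proof (rule ccontr)
  assume n: "\<not> ?thesis"
  have "\<not> set_connected G S"
    by (rule sc_disconnI[of "{a}" "S - {a}"]) (use assms n in auto)
  then show False using assms(1) by simp
qed

lemma mono_fibre:
  assumes "monotone_epi f G H" "y \<in> verts H" shows "set_connected G (f -` {y} \<inter> verts G)"
proof -
  have a: "\<forall>S\<subseteq>verts H. set_connected H S \<longrightarrow> set_connected G (f -` S \<inter> verts G)"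
    using assms(1) unfolding monotone_epi_def by simp
  have "{y} \<subseteq> verts H" using assms(2) by simp
  then show ?thesis using a sc_single[of H y] by simp
qed

lemma mono_conn:
  assumes "monotone_epi f G H" "S \<subseteq> verts H" "set_connected H S"
  shows "set_connected G (f -` S \<inter> verts G)"
  using assms unfolding monotone_epi_def by simp

lemma mono_epi: "monotone_epi f G H \<Longrightarrow> graph_epi f G H"
  unfolding monotone_epi_def by simp

lemma epi_hom: "graph_epi f G H \<Longrightarrow> (a, b) \<in> edges G \<Longrightarrow> (f a, f b) \<in> edges H"
  unfolding graph_epi_def graph_hom_def by auto

lemma epi_vert: "graph_epi f G H \<Longrightarrow> a \<in> verts G \<Longrightarrow> f a \<in> verts H"
  unfolding graph_epi_def graph_hom_def by auto

lemma epi_vsurj: "graph_epi f G H \<Longrightarrow> f ` verts G = verts H"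
  unfolding graph_epi_def by simp

lemma epi_esurj:
  assumes "graph_epi f G H" "(c, d) \<in> edges H" shows "\<exists>a b. (a, b) \<in> edges G \<and> f a = c \<and> f b = d"
proof -
  have "(c, d) \<in> (\<lambda>(a, b). (f a, f b)) ` edges G" using assms unfolding graph_epi_def by simp
  then obtain e where "e \<in> edges G" "(c, d) = (\<lambda>(a, b). (f a, f b)) e" by blast
  then show ?thesis by (cases e) auto
qed

lemma graph_epiI:
  assumes "f ` verts G = verts H" "\<And>a b. (a, b) \<in> edges G \<Longrightarrow> (f a, f b) \<in> edges H"
    "\<And>c d. (c, d) \<in> edges H \<Longrightarrow> \<exists>a b. (a, b) \<in> edges G \<and> f a = c \<and> f b = d"
  shows "graph_epi f G H"
  unfolding graph_epi_def graph_hom_def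
proof (intro conjI)
  show "f ` verts G \<subseteq> verts H" "f ` verts G = verts H" using assms(1) by auto
  show "\<forall>(a, b)\<in>edges G. (f a, f b) \<in> edges H" using assms(2) by auto
  show "(\<lambda>(a, b). (f a, f b)) ` edges G = edges H"
  proof
    show "(\<lambda>(a, b). (f a, f b)) ` edges G \<subseteq> edges H" using assms(2) by auto
    show "edges H \<subseteq> (\<lambda>(a, b). (f a, f b)) ` edges G"
    proof
      fix e assume "e \<in> edges H"
      then obtain c d where e: "e = (c, d)" "(c, d) \<in> edges H" by (cases e) auto
      then obtain a b where "(a, b) \<in> edges G" "f a = c" "f b = d" using assms(3) by blast
      then show "e \<in> (\<lambda>(a, b). (f a, f b)) ` edges G" using e by force
    qed
  qed
qed

lemma mono_of_fibres:
  assumes g: "is_graph G" and epi: "graph_epi f G H"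
    and fib: "\<And>y. y \<in> verts H \<Longrightarrow> set_connected G (f -` {y} \<inter> verts G)"
  shows "monotone_epi f G H"
  unfolding monotone_epi_def
proof (intro conjI allI impI epi)
  fix S assume S: "S \<subseteq> verts H" and cS: "set_connected H S"
  show "set_connected G (f -` S \<inter> verts G)"
  proof (rule ccontr)
    assume "\<not> set_connected G (f -` S \<inter> verts G)"
    then obtain P Q where pq: "P \<noteq> {}" "Q \<noteq> {}" "P \<inter> Q = {}" "f -` S \<inter> verts G = P \<union> Q"
      "\<forall>a\<in>P. \<forall>b\<in>Q. (a, b) \<notin> edges G" by (rule sc_disconnE)
    have disj: "f ` P \<inter> f ` Q = {}"
    proof (rule ccontr)
      assume "f ` P \<inter> f ` Q \<noteq> {}"
      then obtain p q where p: "p \<in> P" and q: "q \<in> Q" and fpq: "f p = f q" by blast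
      have pV: "p \<in> verts G" "f p \<in> S" using p pq(4) by auto
      have yV: "f p \<in> verts H" using epi_vert[OF epi pV(1)] .
      have sub: "f -` {f p} \<inter> verts G \<subseteq> P \<union> Q" using pV(2) pq(4) by auto
      have ne: "\<not> (\<exists>a\<in>P. \<exists>b\<in>Q. (a, b) \<in> edges G)" using pq(5) by blast
      have "f -` {f p} \<inter> verts G \<subseteq> P \<or> f -` {f p} \<inter> verts G \<subseteq> Q"
        by (rule sc_split[OF fib[OF yV] sub pq(3) ne])
      moreover have "p \<in> f -` {f p} \<inter> verts G" "q \<in> f -` {f p} \<inter> verts G"
        using pV q fpq pq(4) by auto
      ultimately show False using p q pq(3) by blast
    qed
    have "\<not> set_connected H S"
    proof (rule sc_disconnI[of "f ` P" "f ` Q"])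
      show "f ` P \<noteq> {}" "f ` Q \<noteq> {}" using pq(1,2) by auto
      show "f ` P \<inter> f ` Q = {}" by (rule disj)
      show "S = f ` P \<union> f ` Q"
      proof
        show "S \<subseteq> f ` P \<union> f ` Q"
        proof
          fix y assume "y \<in> S"
          then have "y \<in> f ` verts G" using S epi_vsurj[OF epi] by auto
          then obtain x where "x \<in> verts G" "f x = y" by auto
          then have "x \<in> P \<union> Q" using pq(4) \<open>y \<in> S\<close> by auto
          then show "y \<in> f ` P \<union> f ` Q" using \<open>f x = y\<close> by blast
        qed
        show "f ` P \<union> f ` Q \<subseteq> S" using pq(4) by auto
      qed
      show "\<forall>c\<in>f ` P. \<forall>d\<in>f ` Q. (c, d) \<notin> edges H"
      proof (intro ballI)
      fix c d assume c: "c \<in> f ` P" and d: "d \<in> f ` Q"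
      show "(c, d) \<notin> edges H"
      proof
        assume "(c, d) \<in> edges H"
        then obtain a b where ab: "(a, b) \<in> edges G" "f a = c" "f b = d" using epi_esurj[OF epi] by blast
        have "a \<in> verts G" "b \<in> verts G" using graph_V1[OF g ab(1)] graph_V2[OF g ab(1)] by simp_all
        moreover have "c \<in> S" "d \<in> S" using c d pq(4) by auto
        ultimately have "a \<in> P \<union> Q" "b \<in> P \<union> Q" using ab pq(4) by auto
        have "a \<notin> Q" using ab(2) c disj by blast
        have "b \<notin> P" using ab(3) d disj by blast
        show False using pq(5) ab(1) \<open>a \<in> P \<union> Q\<close> \<open>b \<in> P \<union> Q\<close> \<open>a \<notin> Q\<close> \<open>b \<notin> P\<close> by blast
      qed
      qed
    qed
    then show False using cS by simp
  qed
qed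

lemma mono_comp:
  assumes f: "monotone_epi f G H" and g: "monotone_epi g H K"
  shows "monotone_epi (\<lambda>x. g (f x)) G K"
proof -
  have ef: "graph_epi f G H" and eg: "graph_epi g H K" using f g unfolding monotone_epi_def by auto
  have e: "graph_epi (\<lambda>x. g (f x)) G K"
  proof (rule graph_epiI)
    have "(\<lambda>x. g (f x)) ` verts G = g ` (f ` verts G)" by (simp add: image_image)
    then show "(\<lambda>x. g (f x)) ` verts G = verts K" using epi_vsurj[OF ef] epi_vsurj[OF eg] by simp
    show "\<And>a b. (a, b) \<in> edges G \<Longrightarrow> (g (f a), g (f b)) \<in> edges K" using epi_hom[OF ef] epi_hom[OF eg] by blast
    fix c d assume "(c, d) \<in> edges K"
    then obtain a b where "(a, b) \<in> edges H" "g a = c" "g b = d" using epi_esurj[OF eg] by blast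
    then obtain a' b' where "(a', b') \<in> edges G" "f a' = a" "f b' = b" using epi_esurj[OF ef] by blast
    then show "\<exists>a b. (a, b) \<in> edges G \<and> g (f a) = c \<and> g (f b) = d" using \<open>g a = c\<close> \<open>g b = d\<close> by blast
  qed
  show ?thesis unfolding monotone_epi_def
  proof (intro conjI allI impI e)
    fix S assume S: "S \<subseteq> verts K" "set_connected K S"
    let ?T = "g -` S \<inter> verts H"
    have "set_connected H ?T" using mono_conn[OF g S(1,2)] .
    moreover have "?T \<subseteq> verts H" by simp
    ultimately have "set_connected G (f -` ?T \<inter> verts G)" using mono_conn[OF f, of ?T] by simp
    moreover have "f -` ?T \<inter> verts G = (\<lambda>x. g (f x)) -` S \<inter> verts G" using epi_vert[OF ef] by auto
    ultimately show "set_connected G ((\<lambda>x. g (f x)) -` S \<inter> verts G)" by simp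
  qed
qed

lemma mono_inj:
  assumes "is_graph G" "graph_epi f G H" "inj_on f (verts G)"
  shows "monotone_epi f G H"
proof (rule mono_of_fibres[OF assms(1,2)])
  fix y assume "y \<in> verts H"
  then have "y \<in> f ` verts G" using epi_vsurj[OF assms(2)] by simp
  then obtain x where x: "x \<in> verts G" "f x = y" by auto
  then have "f -` {y} \<inter> verts G = {x}" using assms(3) by (auto dest: inj_onD)
  then show "set_connected G (f -` {y} \<inter> verts G)" by (simp add: sc_single)
qed



lemma path_sub:
  assumes "is_path G a b vs" "set vs \<subseteq> W" "W \<subseteq> verts H"
    "\<And>u w. u \<in> W \<Longrightarrow> w \<in> W \<Longrightarrow> (u, w) \<in> edges G \<Longrightarrow> (u, w) \<in> edges H"
  shows "is_path H a b vs"
  unfolding is_path_def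
proof (intro conjI allI impI)
  show "vs \<noteq> []" "hd vs = a" "last vs = b" "distinct vs" using assms(1) by (simp_all add: is_path_def)
  show "set vs \<subseteq> verts H" using assms(2,3) by simp
  fix i assume i: "Suc i < length vs"
  then have "(vs ! i, vs ! Suc i) \<in> edges G" using assms(1) unfolding is_path_def by simp
  moreover have "vs ! i \<in> W" "vs ! Suc i \<in> W" using i assms(2) nth_mem[of i vs] nth_mem[of "Suc i" vs] by auto
  ultimately show "(vs ! i, vs ! Suc i) \<in> edges H" using assms(4) by simp
qed

lemma path_len2:
  assumes "is_path G a b vs" "a \<noteq> b" shows "2 \<le> length vs"
proof (rule ccontr)
  assume "\<not> 2 \<le> length vs"
  moreover have "vs \<noteq> []" using assms(1) by (simp add: is_path_def)
  ultimately obtain z where "vs = [z]" by (cases vs; cases "tl vs") auto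
  then show False using assms unfolding is_path_def by auto
qed

lemma path_max_end:
  assumes tree: "is_tree T" and vs: "is_path T a b vs" "set vs \<subseteq> S"
    and mx: "\<forall>a' b' ws. is_path T a' b' ws \<and> set ws \<subseteq> S \<longrightarrow> length ws \<le> length vs"
    and len: "2 \<le> length vs" and z: "z \<in> S" "(b, z) \<in> edges T" "z \<noteq> b"
  shows "z = vs ! (length vs - 2)"
proof (rule ccontr)
  assume nz: "z \<noteq> vs ! (length vs - 2)"
  have g: "is_graph T" using tree by (rule tree_graph)
  have zV: "z \<in> verts T" using graph_V2[OF g z(2)] .
  show False
  proof (cases "z \<in> set vs")
    case False
    have "is_path T a z (vs @ [z])" using path_snoc[OF vs(1) z(2) False zV] .
    moreover have "set (vs @ [z]) \<subseteq> S" using vs(2) z(1) by simp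
    ultimately have "length (vs @ [z]) \<le> length vs" using mx by blast
    then show False by simp
  next
    case True
    then obtain i where i: "i < length vs" "vs ! i = z" by (auto simp: in_set_conv_nth)
    have ne: "vs \<noteq> []" and lb: "last vs = b" using vs(1) by (simp_all add: is_path_def)
    have "vs ! (length vs - 1) = b" using ne lb by (simp add: last_conv_nth)
    then have "i \<noteq> length vs - 1" using i z(3) by auto
    moreover have "i \<noteq> length vs - 2" using i nz by auto
    ultimately have i2: "i + 3 \<le> length vs" using i(1) by linarith
    have p1: "is_path T z b (drop i vs)" using path_drop[OF vs(1) i(1)] i(2) by simp
    have "(z, b) \<in> edges T" using graph_sym[OF g z(2)] .
    moreover have "b \<in> verts T" using graph_V1[OF g z(2)] .
    ultimately have p2: "is_path T z b [z, b]" using path_edge zV z(3) by metis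
    have "drop i vs = [z, b]" using tree_path_uniq[OF tree _ p1 p2] z(3) by simp
    then have "length (drop i vs) = 2" by simp
    then show False using i2 by simp
  qed
qed

lemma max_path_end:
  assumes tree: "is_tree T" and vs: "is_path T a b vs" "set vs \<subseteq> S"
    and mx: "\<forall>a' b' ws. is_path T a' b' ws \<and> set ws \<subseteq> S \<longrightarrow> length ws \<le> length vs"
    and len: "2 \<le> length vs"
  shows "\<exists>v. v \<in> S \<and> (b, v) \<in> edges T \<and> b \<noteq> v \<and> (\<forall>z\<in>S. (b, z) \<in> edges T \<longrightarrow> z = b \<or> z = v)"
proof -
  have g: "is_graph T" using tree by (rule tree_graph)
  let ?v = "vs ! (length vs - 2)"
  have ne: "vs \<noteq> []" and lb: "last vs = b" and d: "distinct vs"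
    using vs(1) by (simp_all add: is_path_def)
  have "vs ! (length vs - 1) = b" using ne lb by (simp add: last_conv_nth)
  moreover have "Suc (length vs - 2) < length vs" using len by simp
  then have "(?v, vs ! Suc (length vs - 2)) \<in> edges T" using vs(1) unfolding is_path_def by blast
  moreover have "Suc (length vs - 2) = length vs - 1" using len by simp
  ultimately have e: "(?v, b) \<in> edges T" by simp
  have "?v \<in> set vs" using len by simp
  then have vS: "?v \<in> S" using vs(2) by blast
  have "?v \<noteq> b"
  proof
    assume "?v = b"
    then have "vs ! (length vs - 2) = vs ! (length vs - 1)" using \<open>vs ! (length vs - 1) = b\<close> by simp
    then show False using d len by (simp add: nth_eq_iff_index_eq)
  qed
  moreover have "\<forall>z\<in>S. (b, z) \<in> edges T \<longrightarrow> z = b \<or> z = ?v"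
    using path_max_end[OF tree vs mx len] by blast
  ultimately show ?thesis using vS graph_sym[OF g e] by blast
qed

lemma longest_path:
  assumes tree: "is_tree T" and S: "S \<subseteq> verts T" "set_connected T S" and xy: "x \<in> S" "y \<in> S" "x \<noteq> y"
  shows "\<exists>w1 v1 w2 v2. w1 \<noteq> w2 \<and> w1 \<in> S \<and> w2 \<in> S \<and> v1 \<in> S \<and> v2 \<in> S
    \<and> (w1, v1) \<in> edges T \<and> w1 \<noteq> v1 \<and> (w2, v2) \<in> edges T \<and> w2 \<noteq> v2
    \<and> (\<forall>z\<in>S. (w1, z) \<in> edges T \<longrightarrow> z = w1 \<or> z = v1)
    \<and> (\<forall>z\<in>S. (w2, z) \<in> edges T \<longrightarrow> z = w2 \<or> z = v2)"
proof -
  have g: "is_graph T" using tree by (rule tree_graph)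
  have fS: "finite S" using S(1) tree_finite[OF tree] finite_subset by blast
  define PS where "PS = {vs. (\<exists>a b. is_path T a b vs) \<and> set vs \<subseteq> S}"
  have "PS \<subseteq> {xs. set xs \<subseteq> S \<and> length xs \<le> card S}"
  proof
    fix vs assume "vs \<in> PS"
    then obtain a b where p: "is_path T a b vs" and sv: "set vs \<subseteq> S" unfolding PS_def by blast
    have "distinct vs" using p by (simp add: is_path_def)
    then have "length vs = card (set vs)" by (simp add: distinct_card)
    also have "\<dots> \<le> card S" using card_mono[OF fS sv] .
    finally show "vs \<in> {xs. set xs \<subseteq> S \<and> length xs \<le> card S}" using sv by simp
  qed
  then have fPS: "finite PS" using finite_lists_length_le[OF fS] finite_subset by blast
  obtain c where c: "c \<in> S" "c \<noteq> x" "(x, c) \<in> edges T" using connected_edge[OF S(2) xy] by blast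
  have "is_path T x c [x, c]" using path_edge[OF c(3)] c(2) xy(1) c(1) S(1) by auto
  then have xcP: "[x, c] \<in> PS" unfolding PS_def using xy(1) c(1) by auto
  define L where "L = Max (length ` PS)"
  have "L \<in> length ` PS" unfolding L_def using fPS xcP by (intro Max_in) auto
  then obtain vs where vsP: "vs \<in> PS" and lv: "length vs = L" by auto
  have mx: "\<And>ws. ws \<in> PS \<Longrightarrow> length ws \<le> L" unfolding L_def using fPS by (intro Max_ge) auto
  have len: "2 \<le> length vs" using mx[OF xcP] lv by simp
  obtain a b where p: "is_path T a b vs" and sv: "set vs \<subseteq> S" using vsP unfolding PS_def by blast
  have mx': "\<forall>a' b' ws. is_path T a' b' ws \<and> set ws \<subseteq> S \<longrightarrow> length ws \<le> length vs"
  proof (intro allI impI)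
    fix a' b' ws assume "is_path T a' b' ws \<and> set ws \<subseteq> S"
    then have "ws \<in> PS" unfolding PS_def by blast
    then show "length ws \<le> length vs" using mx lv by simp
  qed
  obtain v1 where v1: "v1 \<in> S \<and> (b, v1) \<in> edges T \<and> b \<noteq> v1 \<and> (\<forall>z\<in>S. (b, z) \<in> edges T \<longrightarrow> z = b \<or> z = v1)"
    using max_path_end[OF tree p sv mx' len] by blast
  have pr: "is_path T b a (rev vs)" using path_rev[OF g p] .
  have mxr: "\<forall>a' b' ws. is_path T a' b' ws \<and> set ws \<subseteq> S \<longrightarrow> length ws \<le> length (rev vs)"
    using mx' by simp
  obtain v2 where v2: "v2 \<in> S \<and> (a, v2) \<in> edges T \<and> a \<noteq> v2 \<and> (\<forall>z\<in>S. (a, z) \<in> edges T \<longrightarrow> z = a \<or> z = v2)"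
    using max_path_end[OF tree pr _ mxr] sv len by (simp only: set_rev length_rev) blast
  have "a \<noteq> b"
  proof
    assume "a = b"
    then have "vs = [a]" using path_aa p by metis
    then show False using len by simp
  qed
  moreover have "a \<in> S" "b \<in> S" using p sv unfolding is_path_def by (auto dest: hd_in_set last_in_set)
  ultimately show ?thesis using v1 v2 by (intro exI[of _ b] exI[of _ v1] exI[of _ a] exI[of _ v2]) simp
qed

lemma unique_edge:
  assumes tree: "is_tree T" and F: "F \<subseteq> verts T" "set_connected T F"
    and G: "G \<subseteq> verts T" "set_connected T G" and d: "F \<inter> G = {}"
    and s: "s1 \<in> F" "s2 \<in> F" "t1 \<in> G" "t2 \<in> G"
    and e: "(s1, t1) \<in> edges T" "(s2, t2) \<in> edges T"
  shows "s1 = s2 \<and> t1 = t2"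
proof -
  obtain ps where ps: "is_path T s1 s2 ps" "set ps \<subseteq> F" using connected_path[OF F(2,1) s(1,2)] by blast
  obtain qs where qs: "is_path T t2 t1 qs" "set qs \<subseteq> G" using connected_path[OF G(2,1) s(4,3)] by blast
  have "set ps \<inter> set qs = {}" using ps(2) qs(2) d by blast
  then have p1: "is_path T s1 t1 (ps @ qs)" using path_append[OF ps(1) qs(1) e(2)] by simp
  have "s1 \<noteq> t1" using s d by blast
  moreover have "s1 \<in> verts T" "t1 \<in> verts T" using s F G by blast+
  ultimately have p2: "is_path T s1 t1 [s1, t1]" using path_edge[OF e(1)] by simp
  have eq: "ps @ qs = [s1, t1]" using tree_path_uniq[OF tree \<open>s1 \<noteq> t1\<close> p1 p2] .
  have pne: "ps \<noteq> []" and qne: "qs \<noteq> []" using ps(1) qs(1) by (simp_all add: is_path_def)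
  obtain p ps' where pp: "ps = p # ps'" using pne by (cases ps) auto
  have "ps' @ qs = [t1]" using eq pp by simp
  then have "ps' = [] \<and> qs = [t1]" using qne by (cases ps') auto
  then have "ps = [s1]" "qs = [t1]" using pp eq by auto
  then show ?thesis using ps(1) qs(1) by (simp add: is_path_def)
qed



lemma graph_collapse: "(verts T, edges T) = T" by (simp add: verts_def edges_def)

lemma leaf_remove_tree:
  assumes tree: "is_tree T" and l: "l \<in> verts T" and x: "x \<in> verts T" "x \<noteq> l" "(l, x) \<in> edges T"
    and nb: "\<And>z. (l, z) \<in> edges T \<Longrightarrow> z = l \<or> z = x"
  shows "is_tree (verts T - {l}, {e \<in> edges T. fst e \<noteq> l \<and> snd e \<noteq> l})"
    (is "is_tree ?T")
proof (rule is_treeI)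
  have g: "is_graph T" using tree by (rule tree_graph)
  show "is_graph ?T" using g unfolding is_graph_def by auto
  show "finite (verts ?T)" using tree_finite[OF tree] by simp
  fix a b assume a: "a \<in> verts ?T" and b: "b \<in> verts ?T" and ab: "a \<noteq> b"
  obtain vs where vs: "is_path T a b vs" using tree_path_ex[OF tree _ _ ab] a b by auto
  have "l \<notin> set vs"
  proof
    assume "l \<in> set vs"
    then show False using no_interior[OF g vs _ _ _ nb] a b by auto
  qed
  moreover have "set vs \<subseteq> verts T" using vs by (simp add: is_path_def)
  ultimately have "set vs \<subseteq> verts T - {l}" by blast
  then show "\<exists>vs. is_path ?T a b vs"
    by (intro exI[of _ vs] path_sub[OF vs, of "verts T - {l}"]) auto
next
  fix a b vs ws assume ab: "a \<noteq> b" and p: "is_path ?T a b vs" "is_path ?T a b ws"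
  have "is_path T a b vs" "is_path T a b ws" using p by (auto intro: path_mono)
  then show "vs = ws" using tree_path_uniq[OF tree ab] by simp
qed

inductive ltree :: "'a set \<Rightarrow> ('a \<times> 'a) set \<Rightarrow> bool" where
  lt_single: "ltree {x} {(x, x)}"
| lt_add: "ltree V E \<Longrightarrow> x \<in> V \<Longrightarrow> y \<notin> V \<Longrightarrow> ltree (insert y V) (E \<union> {(x, y), (y, x), (y, y)})"

lemma ltree_props:
  assumes "ltree V E"
  shows "finite V \<and> V \<noteq> {} \<and> E \<subseteq> V \<times> V \<and> (\<forall>a\<in>V. (a, a) \<in> E) \<and> (\<forall>a b. (a, b) \<in> E \<longrightarrow> (b, a) \<in> E)"
  using assms by induction auto

lemma ltree_graph: "ltree V E \<Longrightarrow> is_graph (V, E)"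
  using ltree_props[of V E] unfolding is_graph_def by auto

lemma ltree_is_tree: "ltree V E \<Longrightarrow> is_tree (V, E)"
proof (induction rule: ltree.induct)
  case (lt_single x)
  show ?case
  proof (rule is_treeI)
    fix a b vs ws assume ab: "a \<noteq> b" and p: "is_path ({x}, {(x, x)}) a b vs"
    have "a \<in> set vs" "b \<in> set vs" using p unfolding is_path_def by (auto dest: hd_in_set last_in_set)
    moreover have "set vs \<subseteq> {x}" using p unfolding is_path_def by simp
    ultimately show "vs = ws" using ab by blast
  qed (auto simp: is_graph_def)
next
  case (lt_add V E x y)
  let ?E' = "E \<union> {(x, y), (y, x), (y, y)}"
  let ?G = "(V, E)" and ?G' = "(insert y V, ?E')"
  have lt': "ltree (insert y V) ?E'" using lt_add.hyps by (rule ltree.lt_add)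
  have g': "is_graph ?G'" using ltree_graph[OF lt'] .
  have EV: "E \<subseteq> V \<times> V" using ltree_props[OF lt_add.hyps(1)] by simp
  have tree: "is_tree ?G" using lt_add.IH .
  have nbY: "\<And>z. (y, z) \<in> edges ?G' \<Longrightarrow> z = y \<or> z = x" using EV lt_add.hyps(3) by auto
  have bck: "is_path ?G a b vs" if "is_path ?G' a b vs" "y \<notin> set vs" for a b vs
  proof (rule path_sub[OF that(1), of V])
    show "set vs \<subseteq> V" using that unfolding is_path_def by auto
    show "V \<subseteq> verts ?G" by simp
    fix u w assume "u \<in> V" "w \<in> V" "(u, w) \<in> edges ?G'"
    then show "(u, w) \<in> edges ?G" using lt_add.hyps(3) by auto
  qed
  have fwd: "is_path ?G' a b vs" if "is_path ?G a b vs" for a b vs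
    by (rule path_mono[OF that]) auto
  have avoid: "y \<notin> set vs" if "is_path ?G' a b vs" "a \<noteq> y" "b \<noteq> y" for a b vs
  proof
    assume "y \<in> set vs"
    show False
    proof (rule no_interior[of ?G' a b vs y x])
      show "is_graph ?G'" "is_path ?G' a b vs" "y \<in> set vs" "y \<noteq> a" "y \<noteq> b"
        using g' that \<open>y \<in> set vs\<close> by auto
      show "\<And>z. (y, z) \<in> edges ?G' \<Longrightarrow> z = y \<or> z = x" by (rule nbY)
    qed
  qed
  have toy: "\<exists>ws. vs = ws @ [y] \<and> is_path ?G a x ws" if p: "is_path ?G' a y vs" and ay: "a \<noteq> y" for a vs
  proof -
    have len: "2 \<le> length vs" using path_len2[OF p ay] .
    define i where "i = length vs - 2"
    have i: "i < length vs" "Suc i = length vs - 1" using len by (simp_all add: i_def)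
    have pt: "is_path ?G' a (vs ! i) (take (Suc i) vs)" using path_take[OF p i(1)] .
    have ne: "vs \<noteq> []" and lv: "last vs = y" and d: "distinct vs" using p by (simp_all add: is_path_def)
    have vy: "vs ! Suc i = y" using i(2) ne lv by (simp add: last_conv_nth)
    have "Suc i < length vs" using i(2) len by simp
    then have "(vs ! i, vs ! Suc i) \<in> edges ?G'" using p unfolding is_path_def by blast
    then have "(vs ! i, y) \<in> edges ?G'" using vy by simp
    then have "(y, vs ! i) \<in> edges ?G'" by (rule graph_sym[OF g'])
    then have "vs ! i = y \<or> vs ! i = x" using nbY by blast
    moreover have "vs ! i \<noteq> vs ! Suc i" using d \<open>Suc i < length vs\<close> nth_eq_iff_index_eq[of vs i "Suc i"] by simp
    then have "vs ! i \<noteq> y" using vy by simp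
    ultimately have vx: "vs ! i = x" by simp
    have tk: "take (Suc i) vs = butlast vs" using i(2) by (simp add: butlast_conv_take)
    have vs_eq: "vs = take (Suc i) vs @ [y]" using tk append_butlast_last_id[OF ne] lv by simp
    have "y \<notin> set (take (Suc i) vs)" using d vs_eq by (metis distinct_append not_distinct_conv_prefix
          distinct.simps(2) distinct_singleton)
    then have "is_path ?G a x (take (Suc i) vs)" using bck pt vx by simp
    then show ?thesis using vs_eq by blast
  qed
  have ex_to_y: "\<exists>vs. is_path ?G' a y vs" if a: "a \<in> V" for a
  proof (cases "a = x")
    case True
    have "is_path ?G' x y [x, y]" using lt_add.hyps(2,3) by (intro path_edge) auto
    then show ?thesis using True by blast
  next
    case False
    obtain ws where ws: "is_path ?G a x ws" using tree_path_ex[OF tree] a lt_add.hyps(2) False by auto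
    have "y \<notin> set ws" using ws lt_add.hyps(3) unfolding is_path_def by auto
    then have "is_path ?G' a y (ws @ [y])" using path_snoc[OF fwd[OF ws]] by auto
    then show ?thesis by blast
  qed
  have uniq_to_y: "vs = ws" if u: "a \<noteq> y" "is_path ?G' a y vs" "is_path ?G' a y ws" for a vs ws
  proof -
    obtain vs' where vs': "vs = vs' @ [y]" "is_path ?G a x vs'" using toy[OF u(2,1)] by blast
    obtain ws' where ws': "ws = ws' @ [y]" "is_path ?G a x ws'" using toy[OF u(3,1)] by blast
    have "vs' = ws'"
    proof (cases "a = x")
      case True then show ?thesis using vs'(2) ws'(2) path_aa by metis
    next
      case False then show ?thesis using vs'(2) ws'(2) tree_path_uniq[OF tree] by blast
    qed
    then show ?thesis using vs' ws' by simp
  qed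
  show ?case
  proof (rule is_treeI)
    show "is_graph ?G'" by (rule g')
    show "finite (verts ?G')" using ltree_props[OF lt'] by simp
  next
    fix a b assume a: "a \<in> verts ?G'" and b: "b \<in> verts ?G'" and ab: "a \<noteq> b"
    show "\<exists>vs. is_path ?G' a b vs"
    proof (cases "a = y")
      case True
      then have "b \<in> V" using b ab by simp
      then obtain vs where "is_path ?G' b y vs" using ex_to_y by blast
      then show ?thesis using path_rev[OF g'] True by blast
    next
      case False
      then have aV: "a \<in> V" using a by simp
      show ?thesis
      proof (cases "b = y")
        case True then show ?thesis using ex_to_y[OF aV] by simp
      next
        case False
        then have "b \<in> V" using b by simp
        then obtain vs where "is_path ?G a b vs" using tree_path_ex[OF tree] aV ab by auto
        then show ?thesis using fwd by blast
      qed
    qed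
  next
    fix a b vs ws assume ab: "a \<noteq> b" and p: "is_path ?G' a b vs" "is_path ?G' a b ws"
    show "vs = ws"
    proof (cases "b = y")
      case True then show ?thesis using uniq_to_y ab p by blast
    next
      case bny: False
      show ?thesis
      proof (cases "a = y")
        case True
        have "is_path ?G' b y (rev vs)" "is_path ?G' b y (rev ws)"
          using path_rev[OF g' p(1)] path_rev[OF g' p(2)] True by simp_all
        then have "rev vs = rev ws" by (rule uniq_to_y[OF bny])
        then show ?thesis by simp
      next
        case False
        have "y \<notin> set vs" "y \<notin> set ws" using avoid p False bny by blast+
        then have "is_path ?G a b vs" "is_path ?G a b ws" using bck p by blast+
        then show ?thesis using tree_path_uniq[OF tree ab] by blast
      qed
    qed
  qed
qed



lemma tree_ltree:
  assumes "is_tree T" "verts T \<noteq> {}"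
  shows "ltree (verts T) (edges T)"
  using assms
proof (induction "card (verts T)" arbitrary: T rule: less_induct)
  case less
  have g: "is_graph T" using less.prems(1) by (rule tree_graph)
  have fin: "finite (verts T)" using less.prems(1) by (rule tree_finite)
  show ?case
  proof (cases "card (verts T) = 1")
    case True
    then obtain x where x: "verts T = {x}" by (rule card_1_singletonE)
    have "edges T \<subseteq> {(x, x)}" using g x unfolding is_graph_def by auto
    moreover have "(x, x) \<in> edges T" using g x unfolding is_graph_def by auto
    ultimately have "edges T = {(x, x)}" by blast
    then show ?thesis using x lt_single by simp
  next
    case False
    then have "card (verts T) \<ge> 2" using less.prems(2) fin by (cases "card (verts T)") auto
    then obtain p q where pq: "p \<in> verts T" "q \<in> verts T" "p \<noteq> q"
      by (metis One_nat_def card.empty card_Suc_Diff1 card_le_Suc0_iff_eq fin not_less_eq_eq numeral_2_eq_2 zero_less_Suc)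
    obtain l x where lx: "l \<in> verts T" "x \<in> verts T" "(l, x) \<in> edges T" "l \<noteq> x"
      "\<forall>z\<in>verts T. (l, z) \<in> edges T \<longrightarrow> z = l \<or> z = x"
      using longest_path[OF less.prems(1) _ tree_connected[OF less.prems(1)] pq] by blast
    have nb: "\<And>z. (l, z) \<in> edges T \<Longrightarrow> z = l \<or> z = x" using lx(5) graph_V2[OF g] by blast
    let ?T = "(verts T - {l}, {e \<in> edges T. fst e \<noteq> l \<and> snd e \<noteq> l})"
    have t': "is_tree ?T" using leaf_remove_tree[OF less.prems(1) lx(1,2) lx(4)[symmetric] lx(3) nb] .
    have "card (verts T) > 0" using fin lx(1) card_gt_0_iff by blast
    moreover have "card (verts ?T) = card (verts T) - 1" using fin lx(1) by simp
    ultimately have "card (verts ?T) < card (verts T)" by linarith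
    moreover have "verts ?T \<noteq> {}" using lx(2,4) by auto
    ultimately have lt: "ltree (verts ?T) (edges ?T)" using less.hyps t' by blast
    have "x \<in> verts ?T" "l \<notin> verts ?T" using lx by auto
    from lt_add[OF lt this]
    have "ltree (insert l (verts T - {l})) ({e \<in> edges T. fst e \<noteq> l \<and> snd e \<noteq> l} \<union> {(x, l), (l, x), (l, l)})"
      by simp
    moreover have "insert l (verts T - {l}) = verts T" using lx(1) by auto
    moreover have "{e \<in> edges T. fst e \<noteq> l \<and> snd e \<noteq> l} \<union> {(x, l), (l, x), (l, l)} = edges T"
    proof
      show "{e \<in> edges T. fst e \<noteq> l \<and> snd e \<noteq> l} \<union> {(x, l), (l, x), (l, l)} \<subseteq> edges T"
        using lx(1,3) graph_sym[OF g lx(3)] graph_refl[OF g lx(1)] by auto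
      show "edges T \<subseteq> {e \<in> edges T. fst e \<noteq> l \<and> snd e \<noteq> l} \<union> {(x, l), (l, x), (l, l)}"
      proof
        fix e assume e: "e \<in> edges T"
        obtain a b where ab: "e = (a, b)" by (cases e)
        show "e \<in> {e \<in> edges T. fst e \<noteq> l \<and> snd e \<noteq> l} \<union> {(x, l), (l, x), (l, l)}"
        proof (cases "a = l")
          case True then show ?thesis using nb[of b] e ab by auto
        next
          case False
          show ?thesis
          proof (cases "b = l")
            case True
            then have "(l, a) \<in> edges T" using graph_sym[OF g] e ab by simp
            then show ?thesis using nb[of a] ab True by auto
          next
            case False then show ?thesis using e ab \<open>a \<noteq> l\<close> by auto
          qed
        qed
      qed
    qed
    ultimately show ?thesis by simp
  qed
qed

definition pmap :: "('a \<Rightarrow> 'b) \<Rightarrow> ('a \<times> 'a) set \<Rightarrow> ('b \<times> 'b) set" where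
  "pmap f E = (\<lambda>(a, b). (f a, f b)) ` E"

lemma pmap_mem: "(a, b) \<in> E \<Longrightarrow> (f a, f b) \<in> pmap f E"
  unfolding pmap_def by force

lemma pmap_memE: "(c, d) \<in> pmap f E \<Longrightarrow> (\<And>a b. (a, b) \<in> E \<Longrightarrow> c = f a \<Longrightarrow> d = f b \<Longrightarrow> thesis) \<Longrightarrow> thesis"
  unfolding pmap_def by auto

lemma pmap_simps: "pmap f (A \<union> B) = pmap f A \<union> pmap f B" "pmap f {} = {}"
  "pmap f (insert (a, b) A) = insert (f a, f b) (pmap f A)"
  unfolding pmap_def by auto

lemma ltree_rename:
  assumes "ltree V E" "inj_on f V"
  shows "ltree (f ` V) (pmap f E)"
  using assms
proof (induction rule: ltree.induct)
  case (lt_single x)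
  show ?case using ltree.lt_single[of "f x"] by (simp add: pmap_simps)
next
  case (lt_add V E x y)
  have "inj_on f V" using lt_add.prems by (simp add: inj_on_insert)
  then have "ltree (f ` V) (pmap f E)" using lt_add.IH by simp
  moreover have "f x \<in> f ` V" using lt_add.hyps(2) by simp
  moreover have "f y \<notin> f ` V" using lt_add.prems lt_add.hyps(3) by (simp add: inj_on_insert)
  ultimately have "ltree (insert (f y) (f ` V)) (pmap f E \<union> {(f x, f y), (f y, f x), (f y, f y)})"
    by (rule ltree.lt_add)
  then show ?case by (simp add: pmap_simps)
qed

definition cmap :: "'a \<Rightarrow> 'a \<Rightarrow> 'a \<Rightarrow> 'a" where
  "cmap u v z = (if z = u then v else z)"

lemma cmap_u[simp]: "cmap u v u = v" by (simp add: cmap_def)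
lemma cmap_o[simp]: "z \<noteq> u \<Longrightarrow> cmap u v z = z" by (simp add: cmap_def)

lemma pmap_id_on:
  assumes "\<And>a b. (a, b) \<in> E \<Longrightarrow> f a = a \<and> f b = b"
  shows "pmap f E = E"
proof
  show "pmap f E \<subseteq> E"
  proof
    fix e assume "e \<in> pmap f E"
    then obtain a b where "(a, b) \<in> E" "e = (f a, f b)" unfolding pmap_def by auto
    then show "e \<in> E" using assms by auto
  qed
  show "E \<subseteq> pmap f E"
  proof
    fix e assume e: "e \<in> E"
    obtain a b where ab: "e = (a, b)" by (cases e)
    then have "(f a, f b) \<in> pmap f E" using e pmap_mem by metis
    then show "e \<in> pmap f E" using assms e ab by auto
  qed
qed

lemma ltree_contract:
  assumes "ltree V E" "(u, v) \<in> E" "u \<noteq> v"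
  shows "ltree (V - {u}) (pmap (cmap u v) E)"
  using assms
proof (induction arbitrary: u v rule: ltree.induct)
  case (lt_single x)
  then show ?case by simp
next
  case (lt_add V E x y)
  have props: "E \<subseteq> V \<times> V" "(x, x) \<in> E" using ltree_props[OF lt_add.hyps(1)] lt_add.hyps(2) by auto
  have xy: "x \<noteq> y" using lt_add.hyps(2,3) by auto
  have "(u, v) \<in> E \<or> (u, v) = (x, y) \<or> (u, v) = (y, x) \<or> (u, v) = (y, y)" using lt_add.prems(1) by blast
  then consider "(u, v) = (x, y)" | "(u, v) = (y, x)" | "(u, v) \<in> E"
    using lt_add.prems(2) by blast
  then show ?case
  proof cases
    case 1
    then have uv: "u = x" "v = y" by simp_all
    have inj: "inj_on (cmap x y) V"
    proof (rule inj_onI)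
      fix a b assume ab: "a \<in> V" "b \<in> V" "cmap x y a = cmap x y b"
      show "a = b"
      proof (cases "a = x")
        case True
        show ?thesis
        proof (cases "b = x")
          case False then have "cmap x y b = b" by simp
          then have "b = y" using ab(3) True by simp
          then show ?thesis using ab(2) lt_add.hyps(3) by simp
        qed (use True in simp)
      next
        case False
        show ?thesis
        proof (cases "b = x")
          case True then have "a = y" using ab(3) False by simp
          then show ?thesis using ab(1) lt_add.hyps(3) by simp
        next
          case False then show ?thesis using ab(3) \<open>a \<noteq> x\<close> by simp
        qed
      qed
    qed
    have lt: "ltree (cmap x y ` V) (pmap (cmap x y) E)" using ltree_rename[OF lt_add.hyps(1) inj] .
    have "cmap x y ` V = insert y V - {x}"
    proof
      show "cmap x y ` V \<subseteq> insert y V - {x}"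
      proof
        fix z assume "z \<in> cmap x y ` V"
        then obtain w where w: "w \<in> V" "z = cmap x y w" by auto
        show "z \<in> insert y V - {x}" using w xy by (cases "w = x") auto
      qed
      show "insert y V - {x} \<subseteq> cmap x y ` V"
      proof
        fix z assume z: "z \<in> insert y V - {x}"
        show "z \<in> cmap x y ` V"
        proof (cases "z = y")
          case True then have "z = cmap x y x" by simp
          then show ?thesis using lt_add.hyps(2) by blast
        next
          case False then have "z \<in> V" "z \<noteq> x" using z by auto
          then have "z = cmap x y z" by simp
          then show ?thesis using \<open>z \<in> V\<close> by blast
        qed
      qed
    qed
    moreover have "pmap (cmap x y) (E \<union> {(x, y), (y, x), (y, y)}) = pmap (cmap x y) E"
    proof -
      have "(cmap x y x, cmap x y x) \<in> pmap (cmap x y) E" using props(2) by (rule pmap_mem)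
      then have yy: "(y, y) \<in> pmap (cmap x y) E" by simp
      have "pmap (cmap x y) (E \<union> {(x, y), (y, x), (y, y)}) = insert (y, y) (pmap (cmap x y) E)"
        using xy[symmetric] by (simp add: pmap_simps)
      then show ?thesis using yy by (simp add: insert_absorb)
    qed
    ultimately show ?thesis using lt uv by simp
  next
    case 2
    then have uv: "u = y" "v = x" by simp_all
    have "pmap (cmap y x) E = E"
    proof (rule pmap_id_on)
      fix a b assume "(a, b) \<in> E"
      then have "a \<noteq> y" "b \<noteq> y" using props(1) lt_add.hyps(3) by auto
      then show "cmap y x a = a \<and> cmap y x b = b" by simp
    qed
    moreover have "pmap (cmap y x) (E \<union> {(x, y), (y, x), (y, y)}) = insert (x, x) (pmap (cmap y x) E)"
      using xy by (simp add: pmap_simps)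
    ultimately have "pmap (cmap y x) (E \<union> {(x, y), (y, x), (y, y)}) = E"
      using props(2) by auto
    moreover have "insert y V - {y} = V" using lt_add.hyps(3) by auto
    ultimately show ?thesis using uv lt_add.hyps(1) by simp
  next
    case 3
    have uV: "u \<in> V" "v \<in> V" using 3 props(1) by auto
    have IH: "ltree (V - {u}) (pmap (cmap u v) E)" using lt_add.IH[OF 3 lt_add.prems(2)] .
    have "cmap u v x \<in> V - {u}" using lt_add.hyps(2) uV lt_add.prems(2) by (cases "x = u") auto
    moreover have "y \<notin> V - {u}" using lt_add.hyps(3) by simp
    ultimately have "ltree (insert y (V - {u})) (pmap (cmap u v) E \<union> {(cmap u v x, y), (y, cmap u v x), (y, y)})"
      by (rule ltree.lt_add[OF IH])
    moreover have "insert y (V - {u}) = insert y V - {u}" using uV lt_add.hyps(3) by auto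
    moreover have "y \<noteq> u" using uV lt_add.hyps(3) by auto
    then have "cmap u v y = y" by simp
    ultimately show ?thesis by (simp add: pmap_simps)
  qed
qed

lemma ltree_subdiv:
  assumes "ltree V E" "(s, t) \<in> E" "s \<noteq> t" "m \<notin> V"
  shows "ltree (insert m V) ((E - {(s, t), (t, s)}) \<union> {(s, m), (m, s), (m, t), (t, m), (m, m)})"
  using assms
proof (induction arbitrary: s t m rule: ltree.induct)
  case (lt_single x)
  then show ?case by simp
next
  case (lt_add V E x y)
  have props: "E \<subseteq> V \<times> V" using ltree_props[OF lt_add.hyps(1)] by auto
  have mV: "m \<notin> V" "m \<noteq> y" using lt_add.prems(3) by auto
  have xy: "(x, y) \<notin> E" "(y, x) \<notin> E" "(y, y) \<notin> E" using props lt_add.hyps(3) by auto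
  consider "(s, t) = (x, y) \<or> (s, t) = (y, x)" | "(s, t) \<in> E"
    using lt_add.prems(1,2) by auto
  then show ?case
  proof cases
    case 1
    have l1: "ltree (insert m V) (E \<union> {(x, m), (m, x), (m, m)})"
      using ltree.lt_add[OF lt_add.hyps(1) lt_add.hyps(2) mV(1)] .
    have "y \<notin> insert m V" using mV lt_add.hyps(3) by auto
    then have l2: "ltree (insert y (insert m V)) ((E \<union> {(x, m), (m, x), (m, m)}) \<union> {(m, y), (y, m), (y, y)})"
      using ltree.lt_add[OF l1] by blast
    have "insert y (insert m V) = insert m (insert y V)" by auto
    moreover have "(E \<union> {(x, m), (m, x), (m, m)}) \<union> {(m, y), (y, m), (y, y)}
      = ((E \<union> {(x, y), (y, x), (y, y)}) - {(s, t), (t, s)}) \<union> {(s, m), (m, s), (m, t), (t, m), (m, m)}"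
      using 1 xy lt_add.prems(2) lt_add.hyps(2,3) by auto
    ultimately show ?thesis using l2 by simp
  next
    case 2
    have IH: "ltree (insert m V) ((E - {(s, t), (t, s)}) \<union> {(s, m), (m, s), (m, t), (t, m), (m, m)})"
      using lt_add.IH[OF 2 lt_add.prems(2) mV(1)] .
    have "x \<in> insert m V" "y \<notin> insert m V" using lt_add.hyps(2,3) mV by auto
    from ltree.lt_add[OF IH this]
    have l: "ltree (insert y (insert m V)) (((E - {(s, t), (t, s)}) \<union> {(s, m), (m, s), (m, t), (t, m), (m, m)}) \<union> {(x, y), (y, x), (y, y)})" .
    have st: "s \<in> V" "t \<in> V" using 2 props by auto
    have "insert y (insert m V) = insert m (insert y V)" by auto
    moreover have "((E - {(s, t), (t, s)}) \<union> {(s, m), (m, s), (m, t), (t, m), (m, m)}) \<union> {(x, y), (y, x), (y, y)}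
      = ((E \<union> {(x, y), (y, x), (y, y)}) - {(s, t), (t, s)}) \<union> {(s, m), (m, s), (m, t), (t, m), (m, m)}"
      using st lt_add.hyps(3) by auto
    ultimately show ?thesis using l by simp
  qed
qed



lemma fresh_nat:
  assumes "finite (V :: nat set)"
  shows "Suc (Max (insert 0 V)) \<notin> V" "Suc (Suc (Max (insert 0 V))) \<notin> V"
proof -
  have "\<And>x. x \<in> V \<Longrightarrow> x \<le> Max (insert 0 V)" using assms by simp
  then show "Suc (Max (insert 0 V)) \<notin> V" "Suc (Suc (Max (insert 0 V))) \<notin> V" by fastforce+
qed

lemma card_insert_diff_le:
  assumes "finite A" "t \<in> A" shows "card (insert m (A - {t})) \<le> card A"
proof -
  have "card (insert m (A - {t})) \<le> Suc (card (A - {t}))" using assms(1) by (simp add: card_insert_le_m1)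
  also have "\<dots> = card A" using card_Suc_Diff1[OF assms] .
  finally show ?thesis .
qed

lemma subdiv_deg_old:
  assumes g: "is_graph Z" and fin: "finite (verts Z)" and st: "(s, t) \<in> edges Z" "s \<noteq> t"
    and m: "m \<notin> verts Z" and x: "x \<in> verts Z" and X: "X \<subseteq> (- verts Z) \<times> (- verts Z)"
  shows "card {b. (x, b) \<in> (edges Z - {(s, t), (t, s)}) \<union> {(s, m), (m, s), (m, t), (t, m), (m, m)} \<union> X \<and> b \<noteq> x}
    \<le> vorder Z x"
proof -
  let ?N = "{b. (x, b) \<in> edges Z \<and> b \<noteq> x}"
  let ?L = "{b. (x, b) \<in> (edges Z - {(s, t), (t, s)}) \<union> {(s, m), (m, s), (m, t), (t, m), (m, m)} \<union> X \<and> b \<noteq> x}"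
  have fN: "finite ?N" using fin graph_V2[OF g] by (auto intro: finite_subset)
  have xm: "x \<noteq> m" using x m by auto
  have xX: "\<And>b. (x, b) \<notin> X" using X x by auto
  have vo: "vorder Z x = card ?N" by (simp add: vorder_def)
  show ?thesis
  proof (cases "x = s")
    case True
    have "?L \<subseteq> insert m (?N - {t})" using True xX xm by auto
    moreover have "t \<in> ?N" using True st by auto
    ultimately show ?thesis using vo card_insert_diff_le[OF fN, of t m] card_mono[of "insert m (?N - {t})" ?L] fN
      by simp
  next
    case False
    show ?thesis
    proof (cases "x = t")
      case True
      have "?L \<subseteq> insert m (?N - {s})" using True xX xm by auto
      moreover have "s \<in> ?N" using True st graph_sym[OF g st(1)] by auto
      ultimately show ?thesis using vo card_insert_diff_le[OF fN, of s m] card_mono[of "insert m (?N - {s})" ?L] fN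
        by simp
    next
      case False
      have "?L \<subseteq> ?N" using False \<open>x \<noteq> s\<close> xX xm by auto
      then show ?thesis using vo card_mono[OF fN] by simp
    qed
  qed
qed

lemma cross_edge:
  assumes "set_connected G S" "P \<subseteq> S" "P \<noteq> {}" "S - P \<noteq> {}"
  shows "\<exists>a\<in>P. \<exists>b\<in>S - P. (a, b) \<in> edges G"
proof (rule ccontr)
  assume n: "\<not> ?thesis"
  have "\<not> set_connected G S"
    by (rule sc_disconnI[of P "S - P"]) (use assms n in auto)
  then show False using assms(1) by simp
qed

lemma fibre_edge_unique:
  assumes tree: "is_tree B" and mono: "monotone_epi f B A"
    and e: "(w, z) \<in> edges B" "(w', z') \<in> edges B" and eq: "f w = f w'" "f z = f z'" and ne: "f w \<noteq> f z"
  shows "w = w' \<and> z = z'"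
proof -
  have g: "is_graph B" using tree by (rule tree_graph)
  have ep: "graph_epi f B A" using mono by (rule mono_epi)
  have V: "w \<in> verts B" "z \<in> verts B" "w' \<in> verts B" "z' \<in> verts B"
    using e graph_V1[OF g] graph_V2[OF g] by blast+
  let ?F = "f -` {f w} \<inter> verts B" and ?G = "f -` {f z} \<inter> verts B"
  have cF: "set_connected B ?F" using mono_fibre[OF mono epi_vert[OF ep V(1)]] .
  have cG: "set_connected B ?G" using mono_fibre[OF mono epi_vert[OF ep V(2)]] .
  have d: "?F \<inter> ?G = {}" using ne by auto
  show ?thesis
    by (rule unique_edge[OF tree _ cF _ cG d _ _ _ _ e]) (use V eq in auto)
qed



lemma tm3_props:
  assumes "in_TM3 T"
  shows "is_tree T" "is_graph T" "finite (verts T)" "card (verts T) \<ge> 2" "\<And>x. x \<in> verts T \<Longrightarrow> vorder T x \<le> 3"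
    "verts T \<noteq> {}"
  using assms tree_graph[of T] unfolding in_TM3_def is_tree_def by auto

lemma step_leaf:
  fixes B :: "'b graph" and Z' :: "nat graph"
  assumes tree: "is_tree B" and uv: "(u, v) \<in> edges B" "u \<noteq> v"
    and leaf: "\<forall>z. (u, z) \<in> edges B \<longrightarrow> z = u \<or> z = v"
    and Z': "in_TM3 Z'" and p': "monotone_epi p' Z' (verts B - {u}, pmap (cmap u v) (edges B))"
    and c2: "card (verts B - {u}) \<ge> 2"
  shows "\<exists>(Z :: nat graph) p q. in_TM3 Z \<and> monotone_epi p Z B \<and> monotone_epi q Z Z'
           \<and> (\<forall>x\<in>verts Z. cmap u v (p x) = p' (q x))"
proof -
  define B1 where "B1 = (verts B - {u}, pmap (cmap u v) (edges B))"
  have g: "is_graph B" using tree by (rule tree_graph)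
  have uV: "u \<in> verts B" and vV: "v \<in> verts B" using graph_V1[OF g uv(1)] graph_V2[OF g uv(1)] by simp_all
  note zp = tm3_props[OF Z']
  let ?V = "verts Z'" and ?E = "edges Z'"
  have ep': "graph_epi p' Z' B1" using mono_epi[OF p'] unfolding B1_def .
  have mp': "monotone_epi p' Z' B1" using p' unfolding B1_def .
  have pV: "\<And>x. x \<in> ?V \<Longrightarrow> p' x \<in> verts B - {u}" using epi_vert[OF ep'] unfolding B1_def by simp
  have E1sub: "(c, d) \<in> edges B" if cd: "(c, d) \<in> edges B1" for c d
  proof -
    from cd obtain a b where ab: "(a, b) \<in> edges B" "c = cmap u v a" "d = cmap u v b"
      unfolding B1_def by (auto elim: pmap_memE)
    have vv: "(v, v) \<in> edges B" using graph_refl[OF g vV] .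
    show ?thesis
    proof (cases "a = u")
      case True
      then have "b = u \<or> b = v" using leaf ab(1) by blast
      then have "d = v" using ab(3) uv(2) by auto
      then show ?thesis using True ab(2) vv by simp
    next
      case False
      show ?thesis
      proof (cases "b = u")
        case True
        then have "(u, a) \<in> edges B" using graph_sym[OF g ab(1)] by simp
        then have "a = v" using leaf False by blast
        then show ?thesis using True ab(2,3) vv uv(2) by simp
      next
        case False
        then show ?thesis using \<open>a \<noteq> u\<close> ab by simp
      qed
    qed
  qed
  have E2: "(a, b) \<in> edges B1" if "(a, b) \<in> edges B" "a \<noteq> u" "b \<noteq> u" for a b
    using pmap_mem[OF that(1), of "cmap u v"] that(2,3) unfolding B1_def by simp
  have "verts B - {u} - {v} \<noteq> {}"
  proof
    assume "verts B - {u} - {v} = {}"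
    then have "verts B - {u} \<subseteq> {v}" by blast
    then have "card (verts B - {u}) \<le> card {v}" by (intro card_mono) auto
    then show False using c2 by simp
  qed
  then obtain w where w: "w \<in> verts B - {u}" "w \<noteq> v" by blast
  have vsurj: "p' ` ?V = verts B - {u}" using epi_vsurj[OF ep'] unfolding B1_def by simp
  obtain t0 where t0: "t0 \<in> ?V" "p' t0 = w" using w(1) vsurj by (metis imageE)
  obtain s0 where s0: "s0 \<in> ?V" "p' s0 = v" using vV uv(2) vsurj by (metis DiffI imageE singletonD)
  let ?F = "p' -` {v} \<inter> ?V"
  obtain s t where st0: "s \<in> ?F" "t \<in> ?V - ?F" "(s, t) \<in> ?E"
    using cross_edge[OF tree_connected[OF zp(1)], of ?F] s0 t0 w(2) by blast
  have sV: "s \<in> ?V" "p' s = v" and tV: "t \<in> ?V" "p' t \<noteq> v" using st0 by auto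
  have st: "(s, t) \<in> ?E" "s \<noteq> t" using st0 by auto
  define m where "m = Suc (Max (insert 0 ?V))"
  define n where "n = Suc m"
  have mn: "m \<notin> ?V" "n \<notin> ?V" "m \<noteq> n" using fresh_nat[OF zp(3)] unfolding m_def n_def by auto
  define EZ where "EZ = (?E - {(s, t), (t, s)}) \<union> {(s, m), (m, s), (m, t), (t, m), (m, m)} \<union> {(m, n), (n, m), (n, n)}"
  define VZ where "VZ = insert n (insert m ?V)"
  define p where "p = (\<lambda>x. if x = n then u else if x = m then v else p' x)"
  define q where "q = (\<lambda>x. if x = n \<or> x = m then s else x)"
  have lt0: "ltree ?V ?E" using tree_ltree[OF zp(1) zp(6)] .
  have lt1: "ltree (insert m ?V) ((?E - {(s, t), (t, s)}) \<union> {(s, m), (m, s), (m, t), (t, m), (m, m)})"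
    using ltree_subdiv[OF lt0 st mn(1)] .
  have "m \<in> insert m ?V" "n \<notin> insert m ?V" using mn by auto
  from ltree.lt_add[OF lt1 this] have lt2: "ltree VZ EZ" unfolding VZ_def EZ_def by simp
  have tZ: "is_tree (VZ, EZ)" using ltree_is_tree[OF lt2] .
  have gZ: "is_graph (VZ, EZ)" using tree_graph[OF tZ] .
  have pVZ: "p x = p' x" "q x = x" if "x \<in> ?V" for x using that mn unfolding p_def q_def by auto
  have pm: "p m = v" "p n = u" "q m = s" "q n = s" using mn unfolding p_def q_def by auto
  have gZ': "is_graph Z'" using zp(2) .
  have ss: "(s, s) \<in> ?E" using graph_refl[OF gZ' sV(1)] .
  have newE: "(s, m) \<in> EZ" "(m, s) \<in> EZ" "(m, t) \<in> EZ" "(t, m) \<in> EZ" "(m, m) \<in> EZ"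
    "(m, n) \<in> EZ" "(n, m) \<in> EZ" "(n, n) \<in> EZ" unfolding EZ_def by auto
  have oldE: "(a, b) \<in> EZ" if "(a, b) \<in> ?E" "(a, b) \<noteq> (s, t)" "(a, b) \<noteq> (t, s)" for a b
    using that unfolding EZ_def by blast
  have pst: "p s = p' s" "p t = p' t" "q s = s" "q t = t" using pVZ sV tV by auto
  have EZcases: "P a b" if ab: "(a, b) \<in> EZ"
    and old: "\<And>a b. (a, b) \<in> ?E \<Longrightarrow> (a, b) \<noteq> (s, t) \<Longrightarrow> (a, b) \<noteq> (t, s) \<Longrightarrow> P a b"
    and new: "P s m" "P m s" "P m t" "P t m" "P m m" "P m n" "P n m" "P n n" for a b P
    using ab old new unfolding EZ_def by auto
  have epi_p: "graph_epi p (VZ, EZ) B"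
  proof (rule graph_epiI)
    show "p ` verts (VZ, EZ) = verts B"
    proof -
      have "p ` ?V = p' ` ?V" using pVZ by (auto simp: image_iff)
      then have "p ` VZ = insert u (insert v (verts B - {u}))" unfolding VZ_def using pm vsurj by simp
      also have "\<dots> = verts B" using uV vV by auto
      finally show ?thesis by simp
    qed
    fix a b assume "(a, b) \<in> edges (VZ, EZ)"
    then have ab: "(a, b) \<in> EZ" by simp
    show "(p a, p b) \<in> edges B"
    proof (rule EZcases[OF ab])
      fix a b assume "(a, b) \<in> ?E"
      then have "a \<in> ?V" "b \<in> ?V" "(p' a, p' b) \<in> edges B1" using graph_V1[OF gZ'] graph_V2[OF gZ'] epi_hom[OF ep'] by auto
      then show "(p a, p b) \<in> edges B" using E1sub pVZ by simp
    next
      have vv: "(v, v) \<in> edges B" "(u, u) \<in> edges B" using graph_refl[OF g] vV uV by auto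
      have "(p' s, p' t) \<in> edges B" using E1sub epi_hom[OF ep' st(1)] by simp
      then have vt: "(v, p' t) \<in> edges B" using sV by simp
      show "(p s, p m) \<in> edges B" "(p m, p s) \<in> edges B" "(p m, p m) \<in> edges B"
        using vv pm pVZ sV by simp_all
      show "(p m, p t) \<in> edges B" using vt pm pVZ tV by simp
      show "(p t, p m) \<in> edges B" using graph_sym[OF g vt] pm pVZ tV by simp
      show "(p m, p n) \<in> edges B" "(p n, p m) \<in> edges B" "(p n, p n) \<in> edges B"
        using pm graph_sym[OF g uv(1)] uv(1) vv by simp_all
    qed
  next
    fix c d assume cd: "(c, d) \<in> edges B"
    show "\<exists>a b. (a, b) \<in> edges (VZ, EZ) \<and> p a = c \<and> p b = d"
    proof (cases "c = u")
      case True
      then have "d = u \<or> d = v" using leaf cd by blast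
      then show ?thesis
      proof
        assume "d = u" then show ?thesis using True pm newE by (intro exI[of _ n] exI[of _ n]) simp
      next
        assume "d = v" then show ?thesis using True pm newE by (intro exI[of _ n] exI[of _ m]) simp
      qed
    next
      case cu: False
      show ?thesis
      proof (cases "d = u")
        case True
        then have "(u, c) \<in> edges B" using graph_sym[OF g cd] by simp
        then have "c = v" using leaf cu by blast
        then show ?thesis using True pm newE by (intro exI[of _ m] exI[of _ n]) simp
      next
        case False
        then have "(c, d) \<in> edges B1" using E2 cd cu by simp
        then obtain a b where ab: "(a, b) \<in> ?E" "p' a = c" "p' b = d" using epi_esurj[OF ep'] by blast
        have abV: "a \<in> ?V" "b \<in> ?V" using graph_V1[OF gZ' ab(1)] graph_V2[OF gZ' ab(1)] by simp_all
        show ?thesis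
        proof (cases "(a, b) = (s, t)")
          case True
          then have "a = s" "b = t" by simp_all
          then show ?thesis using ab pm pst sV newE by (intro exI[of _ m] exI[of _ t]) simp
        next
          case False
          show ?thesis
          proof (cases "(a, b) = (t, s)")
            case True
            then have "a = t" "b = s" by simp_all
            then show ?thesis using ab pm pst sV newE by (intro exI[of _ t] exI[of _ m]) simp
          next
            case False
            then have "(a, b) \<in> EZ" using \<open>(a, b) \<noteq> (s, t)\<close> ab(1) oldE by blast
            then show ?thesis using ab abV pVZ by (intro exI[of _ a] exI[of _ b]) simp
          qed
        qed
      qed
    qed
  qed
  have mono_p: "monotone_epi p (VZ, EZ) B"
  proof (rule mono_of_fibres[OF gZ epi_p])
    fix y assume yB: "y \<in> verts B"
    let ?Fy = "p' -` {y} \<inter> ?V"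
    have inner: "set_connected (VZ, EZ) ?Fy" if yu: "y \<noteq> u"
    proof -
      have "y \<in> verts B1" using yB yu unfolding B1_def by simp
      then have c: "set_connected Z' ?Fy" using mono_fibre[OF mp'] by simp
      show ?thesis
      proof (rule sc_mono_edges[OF c])
        fix a b assume a: "a \<in> ?Fy" and b: "b \<in> ?Fy" and e: "(a, b) \<in> ?E"
        have "(a, b) \<noteq> (s, t)" "(a, b) \<noteq> (t, s)" using a b sV tV by auto
        then show "(a, b) \<in> edges (VZ, EZ)" using e oldE by simp
      qed
    qed
    show "set_connected (VZ, EZ) (p -` {y} \<inter> verts (VZ, EZ))"
    proof (cases "y = u")
      case True
      have "p -` {y} \<inter> VZ = {n}"
      proof
        show "p -` {y} \<inter> VZ \<subseteq> {n}"
        proof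
          fix x assume x: "x \<in> p -` {y} \<inter> VZ"
          show "x \<in> {n}"
          proof (cases "x \<in> ?V")
            case True then have "p x \<noteq> u" using pVZ pV by auto
            then show ?thesis using x \<open>y = u\<close> by simp
          next
            case False then have "x = n \<or> x = m" using x unfolding VZ_def by auto
            then show ?thesis using x pm \<open>y = u\<close> uv(2) by auto
          qed
        qed
        show "{n} \<subseteq> p -` {y} \<inter> VZ" using pm True unfolding VZ_def by auto
      qed
      then show ?thesis by (simp add: sc_single)
    next
      case yu: False
      show ?thesis
      proof (cases "y = v")
        case True
        have eq: "p -` {y} \<inter> VZ = ?Fy \<union> {m}"
        proof
          show "p -` {y} \<inter> VZ \<subseteq> ?Fy \<union> {m}"
          proof
            fix x assume x: "x \<in> p -` {y} \<inter> VZ"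
            show "x \<in> ?Fy \<union> {m}"
            proof (cases "x \<in> ?V")
              case True then show ?thesis using x pVZ by auto
            next
              case False then have "x = n \<or> x = m" using x unfolding VZ_def by auto
              then show ?thesis using x pm True uv(2) by auto
            qed
          qed
          show "?Fy \<union> {m} \<subseteq> p -` {y} \<inter> VZ" using pVZ pm True unfolding VZ_def by auto
        qed
        have "s \<in> ?Fy" using sV True by simp
        moreover have "(s, m) \<in> EZ" "(m, s) \<in> EZ" unfolding EZ_def by auto
        ultimately have "set_connected (VZ, EZ) (?Fy \<union> {m})"
          using sc_union[of "(VZ, EZ)" ?Fy "{m}" s m, OF inner[OF yu] sc_single] by simp
        then show ?thesis using eq by simp
      next
        case False
        have "p -` {y} \<inter> VZ = ?Fy"
        proof
          show "p -` {y} \<inter> VZ \<subseteq> ?Fy"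
          proof
            fix x assume x: "x \<in> p -` {y} \<inter> VZ"
            show "x \<in> ?Fy"
            proof (cases "x \<in> ?V")
              case True then show ?thesis using x pVZ by auto
            next
              case False then have "x = n \<or> x = m" using x unfolding VZ_def by auto
              then show ?thesis using x pm \<open>y \<noteq> v\<close> yu by auto
            qed
          qed
          show "?Fy \<subseteq> p -` {y} \<inter> VZ" using pVZ unfolding VZ_def by auto
        qed
        then show ?thesis using inner[OF yu] by simp
      qed
    qed
  qed
  have epi_q: "graph_epi q (VZ, EZ) Z'"
  proof (rule graph_epiI)
    have "q ` ?V = ?V" using pVZ by (auto simp: image_iff)
    then show "q ` verts (VZ, EZ) = verts Z'" unfolding VZ_def using pm sV by auto
    fix a b assume "(a, b) \<in> edges (VZ, EZ)"
    then have ab: "(a, b) \<in> EZ" by simp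
    show "(q a, q b) \<in> edges Z'"
    proof (rule EZcases[OF ab])
      fix a b assume "(a, b) \<in> ?E"
      then have "a \<in> ?V" "b \<in> ?V" using graph_V1[OF gZ'] graph_V2[OF gZ'] by auto
      then show "(q a, q b) \<in> edges Z'" using pVZ \<open>(a, b) \<in> ?E\<close> by simp
    next
      show "(q s, q m) \<in> ?E" "(q m, q s) \<in> ?E" "(q m, q m) \<in> ?E" "(q m, q n) \<in> ?E" "(q n, q m) \<in> ?E" "(q n, q n) \<in> ?E"
        using ss pm pVZ sV by simp_all
      show "(q m, q t) \<in> ?E" using st pm pVZ tV by simp
      show "(q t, q m) \<in> ?E" using graph_sym[OF gZ' st(1)] pm pVZ tV by simp
    qed
  next
    fix c d assume cd: "(c, d) \<in> edges Z'"
    have cdV: "c \<in> ?V" "d \<in> ?V" using graph_V1[OF gZ' cd] graph_V2[OF gZ' cd] by simp_all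
    show "\<exists>a b. (a, b) \<in> edges (VZ, EZ) \<and> q a = c \<and> q b = d"
    proof (cases "(c, d) = (s, t)")
      case True then show ?thesis using pm pst newE by (intro exI[of _ m] exI[of _ t]) simp
    next
      case False
      show ?thesis
      proof (cases "(c, d) = (t, s)")
        case True then show ?thesis using pm pst newE by (intro exI[of _ t] exI[of _ m]) simp
      next
        case False
        then have "(c, d) \<in> EZ" using \<open>(c, d) \<noteq> (s, t)\<close> cd oldE by blast
        then show ?thesis using cdV pVZ by (intro exI[of _ c] exI[of _ d]) simp
      qed
    qed
  qed
  have mono_q: "monotone_epi q (VZ, EZ) Z'"
  proof (rule mono_of_fibres[OF gZ epi_q])
    fix y assume yV: "y \<in> verts Z'"
    show "set_connected (VZ, EZ) (q -` {y} \<inter> verts (VZ, EZ))"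
    proof (cases "y = s")
      case True
      have eq: "q -` {y} \<inter> VZ = ({s} \<union> {m}) \<union> {n}"
        using True pm pVZ sV unfolding VZ_def by auto
      have c1: "set_connected (VZ, EZ) ({s} \<union> {m})"
        by (rule sc_union[of "(VZ, EZ)" "{s}" "{m}" s m, OF sc_single sc_single]) (use newE in auto)
      have "set_connected (VZ, EZ) (({s} \<union> {m}) \<union> {n})"
        by (rule sc_union[of "(VZ, EZ)" "{s} \<union> {m}" "{n}" m n, OF c1 sc_single]) (use newE in auto)
      then show ?thesis using eq by simp
    next
      case False
      have "q -` {y} \<inter> VZ = {y}" using False pm pVZ yV mn unfolding VZ_def by auto
      then show ?thesis by (simp add: sc_single)
    qed
  qed
  have comm: "\<forall>x\<in>verts (VZ, EZ). cmap u v (p x) = p' (q x)"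
  proof
    fix x assume "x \<in> verts (VZ, EZ)"
    then have "x = n \<or> x = m \<or> x \<in> ?V" unfolding VZ_def by auto
    then show "cmap u v (p x) = p' (q x)"
    proof (elim disjE)
      assume "x = n" then show ?thesis using pm sV by simp
    next
      assume "x = m" then show ?thesis using pm sV uv(2) by simp
    next
      assume x: "x \<in> ?V"
      then have "p' x \<noteq> u" using pV by auto
      then show ?thesis using x pVZ by simp
    qed
  qed
  have deg: "vorder (VZ, EZ) x \<le> 3" if x: "x \<in> VZ" for x
  proof -
    have "x = n \<or> x = m \<or> x \<in> ?V" using x unfolding VZ_def by auto
    then show ?thesis
    proof (elim disjE)
      assume xn: "x = n"
      have "\<And>b. (n, b) \<notin> ?E" using mn graph_V1[OF gZ'] by blast
      then have "{b. (x, b) \<in> EZ \<and> b \<noteq> x} \<subseteq> {m}" using xn mn sV tV unfolding EZ_def by auto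
      then have "card {b. (x, b) \<in> EZ \<and> b \<noteq> x} \<le> card {m}" by (intro card_mono) auto
      then show ?thesis by (simp add: vorder_def)
    next
      assume xm: "x = m"
      have "\<And>b. (m, b) \<notin> ?E" using mn graph_V1[OF gZ'] by blast
      then have "{b. (x, b) \<in> EZ \<and> b \<noteq> x} \<subseteq> {s, t, n}" using xm mn sV tV unfolding EZ_def by auto
      then have "card {b. (x, b) \<in> EZ \<and> b \<noteq> x} \<le> card {s, t, n}" by (intro card_mono) auto
      also have "\<dots> \<le> 3" by (simp add: card_insert_le_m1)
      finally show ?thesis by (simp add: vorder_def)
    next
      assume xV: "x \<in> ?V"
      have X: "{(m, n), (n, m), (n, n)} \<subseteq> (- ?V) \<times> (- ?V)" using mn by auto
      have "card {b. (x, b) \<in> EZ \<and> b \<noteq> x} \<le> vorder Z' x"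
        using subdiv_deg_old[OF gZ' zp(3) st mn(1) xV X] unfolding EZ_def .
      then show ?thesis using zp(5)[OF xV] by (simp add: vorder_def)
    qed
  qed
  have "card VZ \<ge> 2"
  proof -
    have "{m, n} \<subseteq> VZ" unfolding VZ_def by auto
    moreover have "finite VZ" unfolding VZ_def using zp(3) by simp
    ultimately have "card {m, n} \<le> card VZ" by (rule card_mono[rotated])
    then show ?thesis using mn(3) by simp
  qed
  then have "in_TM3 (VZ, EZ)" using tZ deg unfolding in_TM3_def by simp
  then show ?thesis using mono_p mono_q comm by blast
qed



lemma step_nonleaf:
  fixes B :: "'b graph" and Z' :: "nat graph"
  assumes tree: "is_tree B" and uv: "(u, v) \<in> edges B" "u \<noteq> v"
    and al: "\<alpha> \<noteq> u" "\<alpha> \<noteq> v" "(u, \<alpha>) \<in> edges B"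
    and nb: "\<forall>z. (u, z) \<in> edges B \<longrightarrow> z = u \<or> z = v \<or> z = \<alpha>"
    and Z': "in_TM3 Z'" and p': "monotone_epi p' Z' (verts B - {u}, pmap (cmap u v) (edges B))"
  shows "\<exists>(Z :: nat graph) p q. in_TM3 Z \<and> monotone_epi p Z B \<and> monotone_epi q Z Z'
           \<and> (\<forall>x\<in>verts Z. cmap u v (p x) = p' (q x))"
proof -
  define B1 where "B1 = (verts B - {u}, pmap (cmap u v) (edges B))"
  have g: "is_graph B" using tree by (rule tree_graph)
  have uV: "u \<in> verts B" and vV: "v \<in> verts B" using graph_V1[OF g uv(1)] graph_V2[OF g uv(1)] by simp_all
  have aV: "\<alpha> \<in> verts B" using graph_V2[OF g al(3)] .
  note zp = tm3_props[OF Z']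
  let ?V = "verts Z'" and ?E = "edges Z'"
  have ep': "graph_epi p' Z' B1" using mono_epi[OF p'] unfolding B1_def .
  have mp': "monotone_epi p' Z' B1" using p' unfolding B1_def .
  have pV: "\<And>x. x \<in> ?V \<Longrightarrow> p' x \<in> verts B - {u}" using epi_vert[OF ep'] unfolding B1_def by simp
  have E3: "(c, d) \<in> edges B \<or> (c = v \<and> d = \<alpha>) \<or> (c = \<alpha> \<and> d = v)" if cd: "(c, d) \<in> edges B1" for c d
  proof -
    from cd obtain a b where ab: "(a, b) \<in> edges B" "c = cmap u v a" "d = cmap u v b"
      unfolding B1_def by (auto elim: pmap_memE)
    have vv: "(v, v) \<in> edges B" using graph_refl[OF g vV] .
    show ?thesis
    proof (cases "a = u")
      case True
      then have "b = u \<or> b = v \<or> b = \<alpha>" using nb ab(1) by blast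
      then have "d = v \<or> d = \<alpha>" using ab(3) uv(2) al by auto
      then show ?thesis using True ab(2) vv by auto
    next
      case False
      show ?thesis
      proof (cases "b = u")
        case True
        then have "(u, a) \<in> edges B" using graph_sym[OF g ab(1)] by simp
        then have "a = v \<or> a = \<alpha>" using nb False by blast
        then show ?thesis using True ab(2,3) vv uv(2) al by auto
      next
        case False
        then show ?thesis using \<open>a \<noteq> u\<close> ab by simp
      qed
    qed
  qed
  have E2: "(a, b) \<in> edges B1" if "(a, b) \<in> edges B" "a \<noteq> u" "b \<noteq> u" for a b
    using pmap_mem[OF that(1), of "cmap u v"] that(2,3) unfolding B1_def by simp
  have "(cmap u v u, cmap u v \<alpha>) \<in> edges B1" using pmap_mem[OF al(3), of "cmap u v"] unfolding B1_def by simp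
  then have va: "(v, \<alpha>) \<in> edges B1" using al(1) by simp
  obtain s t where st0: "(s, t) \<in> ?E" "p' s = v" "p' t = \<alpha>" using epi_esurj[OF ep' va] by blast
  have gZ': "is_graph Z'" using zp(2) .
  have sV: "s \<in> ?V" and tV: "t \<in> ?V" using graph_V1[OF gZ' st0(1)] graph_V2[OF gZ' st0(1)] by simp_all
  have st: "(s, t) \<in> ?E" "s \<noteq> t" using st0 al(2) by auto
  have uniq: "a = s \<and> b = t" if "(a, b) \<in> ?E" "p' a = v" "p' b = \<alpha>" for a b
    using fibre_edge_unique[OF zp(1) mp' that(1) st(1)] that(2,3) st0(2,3) al(2) by simp
  define m where "m = Suc (Max (insert 0 ?V))"
  have mn: "m \<notin> ?V" using fresh_nat[OF zp(3)] unfolding m_def by auto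
  define EZ where "EZ = (?E - {(s, t), (t, s)}) \<union> {(s, m), (m, s), (m, t), (t, m), (m, m)}"
  define VZ where "VZ = insert m ?V"
  define p where "p = (\<lambda>x. if x = m then u else p' x)"
  define q where "q = (\<lambda>x. if x = m then s else x)"
  have lt0: "ltree ?V ?E" using tree_ltree[OF zp(1) zp(6)] .
  have lt2: "ltree VZ EZ" using ltree_subdiv[OF lt0 st mn] unfolding VZ_def EZ_def .
  have tZ: "is_tree (VZ, EZ)" using ltree_is_tree[OF lt2] .
  have gZ: "is_graph (VZ, EZ)" using tree_graph[OF tZ] .
  have pVZ: "p x = p' x" "q x = x" if "x \<in> ?V" for x using that mn unfolding p_def q_def by auto
  have pm: "p m = u" "q m = s" unfolding p_def q_def by auto
  have ss: "(s, s) \<in> ?E" using graph_refl[OF gZ' sV] .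
  have newE: "(s, m) \<in> EZ" "(m, s) \<in> EZ" "(m, t) \<in> EZ" "(t, m) \<in> EZ" "(m, m) \<in> EZ"
    unfolding EZ_def by auto
  have oldE: "(a, b) \<in> EZ" if "(a, b) \<in> ?E" "(a, b) \<noteq> (s, t)" "(a, b) \<noteq> (t, s)" for a b
    using that unfolding EZ_def by blast
  have pst: "p s = v" "p t = \<alpha>" "q s = s" "q t = t" using pVZ sV tV st0 by auto
  have EZcases: "P a b" if ab: "(a, b) \<in> EZ"
    and old: "\<And>a b. (a, b) \<in> ?E \<Longrightarrow> (a, b) \<noteq> (s, t) \<Longrightarrow> (a, b) \<noteq> (t, s) \<Longrightarrow> P a b"
    and new: "P s m" "P m s" "P m t" "P t m" "P m m" for a b P
    using ab old new unfolding EZ_def by auto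
  have vsurj: "p' ` ?V = verts B - {u}" using epi_vsurj[OF ep'] unfolding B1_def by simp
  have epi_p: "graph_epi p (VZ, EZ) B"
  proof (rule graph_epiI)
    show "p ` verts (VZ, EZ) = verts B"
    proof -
      have "p ` ?V = p' ` ?V" using pVZ by (auto simp: image_iff)
      then have "p ` VZ = insert u (verts B - {u})" unfolding VZ_def using pm vsurj by simp
      also have "\<dots> = verts B" using uV by auto
      finally show ?thesis by simp
    qed
    fix a b assume "(a, b) \<in> edges (VZ, EZ)"
    then have ab: "(a, b) \<in> EZ" by simp
    show "(p a, p b) \<in> edges B"
    proof (rule EZcases[OF ab])
      fix a b assume e: "(a, b) \<in> ?E" and n1: "(a, b) \<noteq> (s, t)" and n2: "(a, b) \<noteq> (t, s)"
      have abV: "a \<in> ?V" "b \<in> ?V" using graph_V1[OF gZ' e] graph_V2[OF gZ' e] by simp_all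
      have "(p' a, p' b) \<in> edges B1" using epi_hom[OF ep' e] .
      then have "(p' a, p' b) \<in> edges B \<or> (p' a = v \<and> p' b = \<alpha>) \<or> (p' a = \<alpha> \<and> p' b = v)" by (rule E3)
      moreover have "\<not> (p' a = v \<and> p' b = \<alpha>)" using uniq[OF e] n1 by auto
      moreover have "\<not> (p' a = \<alpha> \<and> p' b = v)"
      proof
        assume h: "p' a = \<alpha> \<and> p' b = v"
        have "(b, a) \<in> ?E" using graph_sym[OF gZ' e] .
        then have "b = s \<and> a = t" using uniq h by blast
        then show False using n2 by simp
      qed
      ultimately show "(p a, p b) \<in> edges B" using pVZ abV by simp
    next
      show "(p s, p m) \<in> edges B" using pst pm graph_sym[OF g uv(1)] by simp
      show "(p m, p s) \<in> edges B" using pst pm uv(1) by simp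
      show "(p m, p t) \<in> edges B" using pst pm al(3) by simp
      show "(p t, p m) \<in> edges B" using pst pm graph_sym[OF g al(3)] by simp
      show "(p m, p m) \<in> edges B" using pm graph_refl[OF g uV] by simp
    qed
  next
    fix c d assume cd: "(c, d) \<in> edges B"
    show "\<exists>a b. (a, b) \<in> edges (VZ, EZ) \<and> p a = c \<and> p b = d"
    proof (cases "c = u")
      case True
      then have "d = u \<or> d = v \<or> d = \<alpha>" using nb cd by blast
      then show ?thesis
      proof (elim disjE)
        assume "d = u" then show ?thesis using True pm newE by (intro exI[of _ m] exI[of _ m]) simp
      next
        assume "d = v" then show ?thesis using True pm pst newE by (intro exI[of _ m] exI[of _ s]) simp
      next
        assume "d = \<alpha>" then show ?thesis using True pm pst newE by (intro exI[of _ m] exI[of _ t]) simp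
      qed
    next
      case cu: False
      show ?thesis
      proof (cases "d = u")
        case True
        then have "(u, c) \<in> edges B" using graph_sym[OF g cd] by simp
        then have "c = v \<or> c = \<alpha>" using nb cu by blast
        then show ?thesis
        proof
          assume "c = v" then show ?thesis using True pm pst newE by (intro exI[of _ s] exI[of _ m]) simp
        next
          assume "c = \<alpha>" then show ?thesis using True pm pst newE by (intro exI[of _ t] exI[of _ m]) simp
        qed
      next
        case False
        then have "(c, d) \<in> edges B1" using E2 cd cu by simp
        then obtain a b where ab: "(a, b) \<in> ?E" "p' a = c" "p' b = d" using epi_esurj[OF ep'] by blast
        have abV: "a \<in> ?V" "b \<in> ?V" using graph_V1[OF gZ' ab(1)] graph_V2[OF gZ' ab(1)] by simp_all
        have n1: "(a, b) \<noteq> (s, t)"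
        proof
          assume "(a, b) = (s, t)"
          then have "c = v" "d = \<alpha>" using ab st0 by auto
          then show False using tree_no_triangle[OF tree uv(1) _ al(3) uv(2) _ al(1)[symmetric]] cd al(2) by auto
        qed
        have n2: "(a, b) \<noteq> (t, s)"
        proof
          assume "(a, b) = (t, s)"
          then have "c = \<alpha>" "d = v" using ab st0 by auto
          then have "(v, \<alpha>) \<in> edges B" using graph_sym[OF g cd] by simp
          then show False using tree_no_triangle[OF tree uv(1) _ al(3) uv(2) _ al(1)[symmetric]] al(2) by auto
        qed
        have "(a, b) \<in> EZ" using oldE[OF ab(1) n1 n2] .
        then show ?thesis using ab abV pVZ by (intro exI[of _ a] exI[of _ b]) simp
      qed
    qed
  qed
  have mono_p: "monotone_epi p (VZ, EZ) B"
  proof (rule mono_of_fibres[OF gZ epi_p])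
    fix y assume yB: "y \<in> verts B"
    let ?Fy = "p' -` {y} \<inter> ?V"
    show "set_connected (VZ, EZ) (p -` {y} \<inter> verts (VZ, EZ))"
    proof (cases "y = u")
      case True
      have "p -` {y} \<inter> VZ = {m}"
      proof
        show "p -` {y} \<inter> VZ \<subseteq> {m}"
        proof
          fix x assume x: "x \<in> p -` {y} \<inter> VZ"
          show "x \<in> {m}"
          proof (cases "x \<in> ?V")
            case True then have "p x \<noteq> u" using pVZ pV by auto
            then show ?thesis using x \<open>y = u\<close> by simp
          next
            case False then show ?thesis using x unfolding VZ_def by auto
          qed
        qed
        show "{m} \<subseteq> p -` {y} \<inter> VZ" using pm True unfolding VZ_def by auto
      qed
      then show ?thesis by (simp add: sc_single)
    next
      case yu: False
      have "y \<in> verts B1" using yB yu unfolding B1_def by simp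
      then have c: "set_connected Z' ?Fy" using mono_fibre[OF mp'] by simp
      have inner: "set_connected (VZ, EZ) ?Fy"
      proof (rule sc_mono_edges[OF c])
        fix a b assume a: "a \<in> ?Fy" and b: "b \<in> ?Fy" and e: "(a, b) \<in> ?E"
        have "(a, b) \<noteq> (s, t)" "(a, b) \<noteq> (t, s)" using a b st0 al(2) by auto
        then show "(a, b) \<in> edges (VZ, EZ)" using e oldE by simp
      qed
      have "p -` {y} \<inter> VZ = ?Fy"
      proof
        show "p -` {y} \<inter> VZ \<subseteq> ?Fy"
        proof
          fix x assume x: "x \<in> p -` {y} \<inter> VZ"
          show "x \<in> ?Fy"
          proof (cases "x \<in> ?V")
            case True then show ?thesis using x pVZ by auto
          next
            case False then have "x = m" using x unfolding VZ_def by auto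
            then show ?thesis using x pm yu by auto
          qed
        qed
        show "?Fy \<subseteq> p -` {y} \<inter> VZ" using pVZ unfolding VZ_def by auto
      qed
      then show ?thesis using inner by simp
    qed
  qed
  have epi_q: "graph_epi q (VZ, EZ) Z'"
  proof (rule graph_epiI)
    have "q ` ?V = ?V" using pVZ by (auto simp: image_iff)
    then show "q ` verts (VZ, EZ) = verts Z'" unfolding VZ_def using pm sV by auto
    fix a b assume "(a, b) \<in> edges (VZ, EZ)"
    then have ab: "(a, b) \<in> EZ" by simp
    show "(q a, q b) \<in> edges Z'"
    proof (rule EZcases[OF ab])
      fix a b assume "(a, b) \<in> ?E"
      then have "a \<in> ?V" "b \<in> ?V" using graph_V1[OF gZ'] graph_V2[OF gZ'] by auto
      then show "(q a, q b) \<in> edges Z'" using pVZ \<open>(a, b) \<in> ?E\<close> by simp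
    next
      show "(q s, q m) \<in> ?E" "(q m, q s) \<in> ?E" "(q m, q m) \<in> ?E"
        using ss pm pst by simp_all
      show "(q m, q t) \<in> ?E" using st pm pst by simp
      show "(q t, q m) \<in> ?E" using graph_sym[OF gZ' st(1)] pm pst by simp
    qed
  next
    fix c d assume cd: "(c, d) \<in> edges Z'"
    have cdV: "c \<in> ?V" "d \<in> ?V" using graph_V1[OF gZ' cd] graph_V2[OF gZ' cd] by simp_all
    show "\<exists>a b. (a, b) \<in> edges (VZ, EZ) \<and> q a = c \<and> q b = d"
    proof (cases "(c, d) = (s, t)")
      case True then show ?thesis using pm pst newE by (intro exI[of _ m] exI[of _ t]) simp
    next
      case False
      show ?thesis
      proof (cases "(c, d) = (t, s)")
        case True then show ?thesis using pm pst newE by (intro exI[of _ t] exI[of _ m]) simp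
      next
        case False
        then have "(c, d) \<in> EZ" using \<open>(c, d) \<noteq> (s, t)\<close> cd oldE by blast
        then show ?thesis using cdV pVZ by (intro exI[of _ c] exI[of _ d]) simp
      qed
    qed
  qed
  have mono_q: "monotone_epi q (VZ, EZ) Z'"
  proof (rule mono_of_fibres[OF gZ epi_q])
    fix y assume yV: "y \<in> verts Z'"
    show "set_connected (VZ, EZ) (q -` {y} \<inter> verts (VZ, EZ))"
    proof (cases "y = s")
      case True
      have eq: "q -` {y} \<inter> VZ = {s} \<union> {m}"
        using True pm pVZ sV unfolding VZ_def by auto
      have c1: "set_connected (VZ, EZ) ({s} \<union> {m})"
        by (rule sc_union[of "(VZ, EZ)" "{s}" "{m}" s m, OF sc_single sc_single]) (use newE in auto)
      then show ?thesis using eq by simp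
    next
      case False
      have "q -` {y} \<inter> VZ = {y}" using False pm pVZ yV mn unfolding VZ_def by auto
      then show ?thesis by (simp add: sc_single)
    qed
  qed
  have comm: "\<forall>x\<in>verts (VZ, EZ). cmap u v (p x) = p' (q x)"
  proof
    fix x assume "x \<in> verts (VZ, EZ)"
    then have "x = m \<or> x \<in> ?V" unfolding VZ_def by auto
    then show "cmap u v (p x) = p' (q x)"
    proof (elim disjE)
      assume "x = m" then show ?thesis using pm st0 by simp
    next
      assume x: "x \<in> ?V"
      then have "p' x \<noteq> u" using pV by auto
      then show ?thesis using x pVZ by simp
    qed
  qed
  have deg: "vorder (VZ, EZ) x \<le> 3" if x: "x \<in> VZ" for x
  proof -
    have "x = m \<or> x \<in> ?V" using x unfolding VZ_def by auto
    then show ?thesis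
    proof (elim disjE)
      assume xm: "x = m"
      have "\<And>b. (m, b) \<notin> ?E" using mn graph_V1[OF gZ'] by blast
      then have "{b. (x, b) \<in> EZ \<and> b \<noteq> x} \<subseteq> {s, t}" using xm mn sV tV unfolding EZ_def by auto
      then have "card {b. (x, b) \<in> EZ \<and> b \<noteq> x} \<le> card {s, t}" by (intro card_mono) auto
      also have "\<dots> \<le> 3" by (simp add: card_insert_le_m1)
      finally show ?thesis by (simp add: vorder_def)
    next
      assume xV: "x \<in> ?V"
      have X: "{} \<subseteq> (- ?V) \<times> (- ?V)" by simp
      have "card {b. (x, b) \<in> EZ \<and> b \<noteq> x} \<le> vorder Z' x"
        using subdiv_deg_old[OF gZ' zp(3) st mn xV X] unfolding EZ_def by simp
      then show ?thesis using zp(5)[OF xV] by (simp add: vorder_def)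
    qed
  qed
  have "card VZ \<ge> 2"
  proof -
    have "finite VZ" unfolding VZ_def using zp(3) by simp
    then have "card ?V \<le> card VZ" unfolding VZ_def by (intro card_mono) auto
    then show ?thesis using zp(4) by simp
  qed
  then have "in_TM3 (VZ, EZ)" using tZ deg unfolding in_TM3_def by simp
  then show ?thesis using mono_p mono_q comm by blast
qed



lemma choose_edge:
  assumes tree: "is_tree B" and A: "in_TM3 A" and mono: "monotone_epi f B A"
    and xy: "x \<in> verts B" "y \<in> verts B" "x \<noteq> y" "f x = f y"
  shows "\<exists>u v. (u, v) \<in> edges B \<and> u \<noteq> v \<and> f u = f v \<and>
    ((\<forall>z. (u, z) \<in> edges B \<longrightarrow> z = u \<or> z = v) \<or>
     (\<exists>\<alpha>. \<alpha> \<noteq> u \<and> \<alpha> \<noteq> v \<and> (u, \<alpha>) \<in> edges B \<and> (\<forall>z. (u, z) \<in> edges B \<longrightarrow> z = u \<or> z = v \<or> z = \<alpha>)))"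
proof -
  have g: "is_graph B" using tree by (rule tree_graph)
  have ep: "graph_epi f B A" using mono by (rule mono_epi)
  note ap = tm3_props[OF A]
  define F where "F = f -` {f x} \<inter> verts B"
  have cF: "set_connected B F" unfolding F_def using mono_fibre[OF mono epi_vert[OF ep xy(1)]] .
  have FV: "F \<subseteq> verts B" unfolding F_def by blast
  have xyF: "x \<in> F" "y \<in> F" using xy unfolding F_def by auto
  obtain w1 v1 w2 v2 where lp: "w1 \<noteq> w2" "w1 \<in> F" "w2 \<in> F" "v1 \<in> F" "v2 \<in> F"
    "(w1, v1) \<in> edges B" "w1 \<noteq> v1" "(w2, v2) \<in> edges B" "w2 \<noteq> v2"
    "\<forall>z\<in>F. (w1, z) \<in> edges B \<longrightarrow> z = w1 \<or> z = v1"
    "\<forall>z\<in>F. (w2, z) \<in> edges B \<longrightarrow> z = w2 \<or> z = v2"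
    using longest_path[OF tree FV cF xyF xy(3)] by blast
  define good where "good w v \<longleftrightarrow> ((\<forall>z. (w, z) \<in> edges B \<longrightarrow> z = w \<or> z = v) \<or>
     (\<exists>\<alpha>. \<alpha> \<noteq> w \<and> \<alpha> \<noteq> v \<and> (w, \<alpha>) \<in> edges B \<and> (\<forall>z. (w, z) \<in> edges B \<longrightarrow> z = w \<or> z = v \<or> z = \<alpha>)))" for w v
  have two: "\<exists>z1 z2. z1 \<noteq> z2 \<and> (w, z1) \<in> edges B \<and> (w, z2) \<in> edges B \<and> z1 \<noteq> w \<and> z1 \<noteq> v \<and> z2 \<noteq> w \<and> z2 \<noteq> v"
    if "\<not> good w v" for w v
  proof -
    from that have n1: "\<not> (\<forall>z. (w, z) \<in> edges B \<longrightarrow> z = w \<or> z = v)" unfolding good_def by blast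
    then obtain z1 where z1: "(w, z1) \<in> edges B" "z1 \<noteq> w" "z1 \<noteq> v" by blast
    from that have "\<not> (\<forall>z. (w, z) \<in> edges B \<longrightarrow> z = w \<or> z = v \<or> z = z1)"
      unfolding good_def using z1 by blast
    then obtain z2 where z2: "(w, z2) \<in> edges B" "z2 \<noteq> w" "z2 \<noteq> v" "z2 \<noteq> z1" by blast
    show ?thesis using z1 z2 by blast
  qed
  have outside: "f z \<noteq> f x" if "(w, z) \<in> edges B" "z \<noteq> w" "z \<noteq> v" "w \<in> F"
    "\<forall>z\<in>F. (w, z) \<in> edges B \<longrightarrow> z = w \<or> z = v" for w v z
  proof
    assume "f z = f x"
    then have "z \<in> F" unfolding F_def using graph_V2[OF g that(1)] by simp
    then show False using that by blast
  qed
  have "good w1 v1 \<or> good w2 v2"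
  proof (rule ccontr)
    assume "\<not> (good w1 v1 \<or> good w2 v2)"
    then have n: "\<not> good w1 v1" "\<not> good w2 v2" by auto
    obtain z1 z2 where z12: "z1 \<noteq> z2" "(w1, z1) \<in> edges B" "(w1, z2) \<in> edges B" "z1 \<noteq> w1" "z1 \<noteq> v1" "z2 \<noteq> w1" "z2 \<noteq> v1"
      using two[OF n(1)] by blast
    obtain z3 z4 where z34: "z3 \<noteq> z4" "(w2, z3) \<in> edges B" "(w2, z4) \<in> edges B" "z3 \<noteq> w2" "z3 \<noteq> v2" "z4 \<noteq> w2" "z4 \<noteq> v2"
      using two[OF n(2)] by blast
    have fw: "f w1 = f x" "f w2 = f x" using lp(2,3) unfolding F_def by auto
    have o1: "f z1 \<noteq> f x" "f z2 \<noteq> f x" using outside[OF z12(2) z12(4,5) lp(2) lp(10)] outside[OF z12(3) z12(6,7) lp(2) lp(10)] by auto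
    have o2: "f z3 \<noteq> f x" "f z4 \<noteq> f x" using outside[OF z34(2) z34(4,5) lp(3) lp(11)] outside[OF z34(3) z34(6,7) lp(3) lp(11)] by auto
    have U: "f z = f z' \<Longrightarrow> w = w' \<and> z = z'" if "(w, z) \<in> edges B" "(w', z') \<in> edges B" "f w = f x" "f w' = f x" "f z \<noteq> f x" for w z w' z'
      using fibre_edge_unique[OF tree mono that(1,2)] that(3,4,5) by simp
    have d: "f z1 \<noteq> f z2" "f z1 \<noteq> f z3" "f z1 \<noteq> f z4" "f z2 \<noteq> f z3" "f z2 \<noteq> f z4" "f z3 \<noteq> f z4"
      using U[OF z12(2) z12(3) fw(1) fw(1) o1(1)] U[OF z12(2) z34(2) fw(1) fw(2) o1(1)]
        U[OF z12(2) z34(3) fw(1) fw(2) o1(1)] U[OF z12(3) z34(2) fw(1) fw(2) o1(2)]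
        U[OF z12(3) z34(3) fw(1) fw(2) o1(2)] U[OF z34(2) z34(3) fw(2) fw(2) o2(1)] z12(1) z34(1) lp(1)
      by auto
    let ?a = "f x"
    let ?N = "{b. (?a, b) \<in> edges A \<and> b \<noteq> ?a}"
    have inN: "f z1 \<in> ?N" "f z2 \<in> ?N" "f z3 \<in> ?N" "f z4 \<in> ?N"
      using epi_hom[OF ep z12(2)] epi_hom[OF ep z12(3)] epi_hom[OF ep z34(2)] epi_hom[OF ep z34(3)] fw o1 o2 by auto
    have fN: "finite ?N" using ap(3) graph_V2[OF ap(2)] by (auto intro: finite_subset)
    have "card {f z1, f z2, f z3, f z4} = 4" using d by simp
    moreover have "card {f z1, f z2, f z3, f z4} \<le> card ?N" using inN fN by (intro card_mono) auto
    moreover have "card ?N \<le> 3" using ap(5)[OF epi_vert[OF ep xy(1)]] by (simp add: vorder_def)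
    ultimately show False by simp
  qed
  then show ?thesis
  proof
    assume "good w1 v1"
    moreover have "f w1 = f v1" using lp(2,4) unfolding F_def by auto
    ultimately show ?thesis using lp(6,7) unfolding good_def by blast
  next
    assume "good w2 v2"
    moreover have "f w2 = f v2" using lp(3,5) unfolding F_def by auto
    ultimately show ?thesis using lp(8,9) unfolding good_def by blast
  qed
qed

lemma contract_mono:
  assumes g: "is_graph B" and gB1: "is_graph (verts B - {u}, pmap (cmap u v) (edges B))"
    and mono: "monotone_epi f B A" and vV: "v \<in> verts B" and uv: "u \<noteq> v" "f u = f v"
  shows "monotone_epi f (verts B - {u}, pmap (cmap u v) (edges B)) A"
proof -
  have ep: "graph_epi f B A" using mono by (rule mono_epi)
  have fc: "f (cmap u v z) = f z" for z using uv by (cases "z = u") auto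
  have epi: "graph_epi f (verts B - {u}, pmap (cmap u v) (edges B)) A"
  proof (rule graph_epiI)
    have "f ` (verts B - {u}) = f ` verts B"
    proof
      show "f ` verts B \<subseteq> f ` (verts B - {u})"
      proof
        fix y assume "y \<in> f ` verts B"
        then obtain z where z: "z \<in> verts B" "y = f z" by auto
        show "y \<in> f ` (verts B - {u})"
        proof (cases "z = u")
          case True then have "y = f v" using z uv by simp
          then show ?thesis using vV uv(1) by auto
        next
          case False then show ?thesis using z by auto
        qed
      qed
    qed auto
    then show "f ` verts (verts B - {u}, pmap (cmap u v) (edges B)) = verts A" using epi_vsurj[OF ep] by simp
  next
    fix a b assume "(a, b) \<in> edges (verts B - {u}, pmap (cmap u v) (edges B))"
    then obtain a' b' where ab: "(a', b') \<in> edges B" "a = cmap u v a'" "b = cmap u v b'"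
      by (auto elim: pmap_memE)
    then show "(f a, f b) \<in> edges A" using epi_hom[OF ep ab(1)] fc by simp
  next
    fix c d assume "(c, d) \<in> edges A"
    then obtain a b where ab: "(a, b) \<in> edges B" "f a = c" "f b = d" using epi_esurj[OF ep] by blast
    then have "(cmap u v a, cmap u v b) \<in> edges (verts B - {u}, pmap (cmap u v) (edges B))"
      using pmap_mem by simp
    then show "\<exists>a b. (a, b) \<in> edges (verts B - {u}, pmap (cmap u v) (edges B)) \<and> f a = c \<and> f b = d"
      using ab fc by blast
  qed
  show ?thesis
  proof (rule mono_of_fibres[OF gB1 epi])
    fix y assume yA: "y \<in> verts A"
    let ?Fy = "f -` {y} \<inter> verts B"
    have c: "set_connected B ?Fy" using mono_fibre[OF mono yA] .
    have "set_connected (verts B - {u}, pmap (cmap u v) (edges B)) (cmap u v ` ?Fy)"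
    proof (rule sc_image[OF c])
      fix a b assume "(a, b) \<in> edges B"
      then show "(cmap u v a, cmap u v b) \<in> edges (verts B - {u}, pmap (cmap u v) (edges B))"
        using pmap_mem by simp
    qed
    moreover have "cmap u v ` ?Fy = f -` {y} \<inter> verts (verts B - {u}, pmap (cmap u v) (edges B))"
    proof
      show "cmap u v ` ?Fy \<subseteq> f -` {y} \<inter> verts (verts B - {u}, pmap (cmap u v) (edges B))"
      proof
        fix z assume "z \<in> cmap u v ` ?Fy"
        then obtain w where w: "w \<in> ?Fy" "z = cmap u v w" by auto
        have "z \<in> verts B" "z \<noteq> u" using w vV uv(1) by (cases "w = u"; auto)+
        moreover have "f z = y" using w fc by simp
        ultimately show "z \<in> f -` {y} \<inter> verts (verts B - {u}, pmap (cmap u v) (edges B))" by simp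
      qed
      show "f -` {y} \<inter> verts (verts B - {u}, pmap (cmap u v) (edges B)) \<subseteq> cmap u v ` ?Fy"
      proof
        fix z assume z: "z \<in> f -` {y} \<inter> verts (verts B - {u}, pmap (cmap u v) (edges B))"
        then have "z \<in> ?Fy" "z \<noteq> u" by auto
        then have "z = cmap u v z" "z \<in> ?Fy" by simp_all
        then show "z \<in> cmap u v ` ?Fy" by blast
      qed
    qed
    ultimately show "set_connected (verts B - {u}, pmap (cmap u v) (edges B))
        (f -` {y} \<inter> verts (verts B - {u}, pmap (cmap u v) (edges B)))" by simp
  qed
qed



lemma transport:
  fixes C :: "'c graph"
  assumes C: "in_TM3 C"
  shows "\<exists>(D :: nat graph) h. in_TM3 D \<and> monotone_epi h D C"
proof -
  note cp = tm3_props[OF C]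
  obtain enc :: "'c \<Rightarrow> nat" and k where enc: "enc ` verts C = {i. i < k}" "inj_on enc (verts C)"
    using finite_imp_inj_to_nat_seg[OF cp(3)] by blast
  define D where "D = (enc ` verts C, pmap enc (edges C))"
  define h where "h = inv_into (verts C) enc"
  have lt: "ltree (enc ` verts C) (pmap enc (edges C))"
    using ltree_rename[OF tree_ltree[OF cp(1) cp(6)] enc(2)] .
  have tD: "is_tree D" unfolding D_def using ltree_is_tree[OF lt] .
  have gD: "is_graph D" using tree_graph[OF tD] .
  have gC: "is_graph C" using cp(2) .
  have hinv: "h (enc a) = a" if "a \<in> verts C" for a unfolding h_def using inv_into_f_f[OF enc(2) that] .
  have cardD: "card (verts D) = card (verts C)" unfolding D_def using card_image[OF enc(2)] by simp
  have deg: "vorder D x \<le> 3" if x: "x \<in> verts D" for x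
  proof -
    obtain c where c: "c \<in> verts C" "x = enc c" using x unfolding D_def by auto
    let ?N = "{b. (c, b) \<in> edges C \<and> b \<noteq> c}"
    have NV: "?N \<subseteq> verts C" using graph_V2[OF gC] by blast
    have "{b. (x, b) \<in> edges D \<and> b \<noteq> x} = enc ` ?N"
    proof
      show "{b. (x, b) \<in> edges D \<and> b \<noteq> x} \<subseteq> enc ` ?N"
      proof
        fix b assume b: "b \<in> {b. (x, b) \<in> edges D \<and> b \<noteq> x}"
        then have "(enc c, b) \<in> pmap enc (edges C)" "b \<noteq> enc c" using c unfolding D_def by auto
        then obtain a b' where ab: "(a, b') \<in> edges C" "enc c = enc a" "b = enc b'" by (auto elim: pmap_memE)
        have "a = c" using inj_onD[OF enc(2) ab(2)] c(1) graph_V1[OF gC ab(1)] by simp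
        moreover have "b' \<noteq> c" using ab(3) \<open>b \<noteq> enc c\<close> by auto
        ultimately show "b \<in> enc ` ?N" using ab by auto
      qed
      show "enc ` ?N \<subseteq> {b. (x, b) \<in> edges D \<and> b \<noteq> x}"
      proof
        fix b assume "b \<in> enc ` ?N"
        then obtain b' where b': "(c, b') \<in> edges C" "b' \<noteq> c" "b = enc b'" by auto
        have "enc b' \<noteq> enc c" using inj_onD[OF enc(2)] b'(2) c(1) graph_V2[OF gC b'(1)] by metis
        then show "b \<in> {b. (x, b) \<in> edges D \<and> b \<noteq> x}" using b' c pmap_mem[OF b'(1), of enc] unfolding D_def by auto
      qed
    qed
    moreover have "card (enc ` ?N) = card ?N" using card_image[OF inj_on_subset[OF enc(2) NV]] .
    moreover have "card ?N \<le> 3" using cp(5)[OF c(1)] by (simp add: vorder_def)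
    ultimately show ?thesis by (simp add: vorder_def)
  qed
  have TM: "in_TM3 D" using tD cardD cp(4) deg unfolding in_TM3_def by simp
  have epi: "graph_epi h D C"
  proof (rule graph_epiI)
    show "h ` verts D = verts C" unfolding D_def h_def using inv_into_image_cancel[OF enc(2)] by simp
    fix a b assume "(a, b) \<in> edges D"
    then obtain a' b' where ab: "(a', b') \<in> edges C" "a = enc a'" "b = enc b'" unfolding D_def by (auto elim: pmap_memE)
    then show "(h a, h b) \<in> edges C" using hinv graph_V1[OF gC ab(1)] graph_V2[OF gC ab(1)] by simp
  next
    fix c d assume cd: "(c, d) \<in> edges C"
    then have "(enc c, enc d) \<in> edges D" unfolding D_def using pmap_mem by simp
    then show "\<exists>a b. (a, b) \<in> edges D \<and> h a = c \<and> h b = d"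
      using hinv graph_V1[OF gC cd] graph_V2[OF gC cd] by blast
  qed
  have "inj_on h (verts D)" unfolding D_def h_def by (simp add: inj_on_inv_into)
  then have "monotone_epi h D C" using mono_inj[OF gD epi] by simp
  then show ?thesis using TM by blast
qed

lemma AP_inj:
  fixes A :: "'a graph" and B :: "'b graph" and C :: "'c graph"
  assumes A: "in_TM3 A" and C: "in_TM3 C" and gB: "is_graph B"
    and f: "monotone_epi f B A" and inj: "inj_on f (verts B)" and g: "monotone_epi g C A"
  shows "\<exists>(D :: nat graph) f0 g0. in_TM3 D \<and> monotone_epi f0 D B \<and> monotone_epi g0 D C
           \<and> (\<forall>x\<in>verts D. f (f0 x) = g (g0 x))"
proof -
  note ap = tm3_props[OF A]
  have ep: "graph_epi f B A" using f by (rule mono_epi)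
  define fi where "fi = inv_into (verts B) f"
  have fi: "fi (f a) = a" if "a \<in> verts B" for a unfolding fi_def using inv_into_f_f[OF inj that] .
  have vA: "verts A = f ` verts B" using epi_vsurj[OF ep] by simp
  have epi: "graph_epi fi A B"
  proof (rule graph_epiI)
    show "fi ` verts A = verts B" unfolding fi_def vA using inv_into_image_cancel[OF inj] by simp
    fix c d assume "(c, d) \<in> edges A"
    then obtain a b where ab: "(a, b) \<in> edges B" "f a = c" "f b = d" using epi_esurj[OF ep] by blast
    then show "(fi c, fi d) \<in> edges B" using fi graph_V1[OF gB ab(1)] graph_V2[OF gB ab(1)] by auto
  next
    fix a b assume ab: "(a, b) \<in> edges B"
    then have "(f a, f b) \<in> edges A" using epi_hom[OF ep] by simp
    then show "\<exists>c d. (c, d) \<in> edges A \<and> fi c = a \<and> fi d = b"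
      using fi graph_V1[OF gB ab] graph_V2[OF gB ab] by blast
  qed
  have "inj_on fi (verts A)" unfolding fi_def vA by (simp add: inj_on_inv_into)
  then have mfi: "monotone_epi fi A B" using mono_inj[OF ap(2) epi] by simp
  obtain D :: "nat graph" and h where D: "in_TM3 D" "monotone_epi h D C" using transport[OF C] by blast
  have m1: "monotone_epi (\<lambda>x. g (h x)) D A" using mono_comp[OF D(2) g] .
  have m2: "monotone_epi (\<lambda>x. fi (g (h x))) D B" using mono_comp[OF m1 mfi] .
  have "\<forall>x\<in>verts D. f (fi (g (h x))) = g (h x)"
  proof
    fix x assume "x \<in> verts D"
    then have "g (h x) \<in> verts A" using epi_vert[OF mono_epi[OF m1]] by simp
    then show "f (fi (g (h x))) = g (h x)" unfolding fi_def vA by (simp add: f_inv_into_f)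
  qed
  then show ?thesis using D m2 by blast
qed

lemma AP_gen:
  fixes A :: "'a graph" and B :: "'b graph" and C :: "'c graph"
  assumes A: "in_TM3 A" and C: "in_TM3 C" and g: "monotone_epi g C A"
  shows "is_tree B \<Longrightarrow> card (verts B) \<ge> 2 \<Longrightarrow> monotone_epi f B A \<Longrightarrow>
    \<exists>(D :: nat graph) f0 g0. in_TM3 D \<and> monotone_epi f0 D B \<and> monotone_epi g0 D C
           \<and> (\<forall>x\<in>verts D. f (f0 x) = g (g0 x))"
proof (induction "card (verts B)" arbitrary: B f rule: less_induct)
  case less
  have gB: "is_graph B" using tree_graph[OF less.prems(1)] .
  have finB: "finite (verts B)" using tree_finite[OF less.prems(1)] .
  note ap = tm3_props[OF A]
  show ?case
  proof (cases "inj_on f (verts B)")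
    case True
    then show ?thesis using AP_inj[OF A C gB less.prems(3) True g] by blast
  next
    case False
    then obtain x y where xy: "x \<in> verts B" "y \<in> verts B" "x \<noteq> y" "f x = f y"
      unfolding inj_on_def by blast
    obtain u v where uv: "(u, v) \<in> edges B" "u \<noteq> v" "f u = f v"
      and cs: "(\<forall>z. (u, z) \<in> edges B \<longrightarrow> z = u \<or> z = v) \<or>
     (\<exists>\<alpha>. \<alpha> \<noteq> u \<and> \<alpha> \<noteq> v \<and> (u, \<alpha>) \<in> edges B \<and> (\<forall>z. (u, z) \<in> edges B \<longrightarrow> z = u \<or> z = v \<or> z = \<alpha>))"
      using choose_edge[OF less.prems(1) A less.prems(3) xy] by blast
    have uV: "u \<in> verts B" and vV: "v \<in> verts B" using graph_V1[OF gB uv(1)] graph_V2[OF gB uv(1)] by simp_all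
    define B1 where "B1 = (verts B - {u}, pmap (cmap u v) (edges B))"
    have "verts B \<noteq> {}" using uV by auto
    then have ltB: "ltree (verts B) (edges B)" using tree_ltree[OF less.prems(1)] by simp
    have tB1: "is_tree B1" unfolding B1_def using ltree_is_tree[OF ltree_contract[OF ltB uv(1,2)]] .
    have gB1: "is_graph B1" using tree_graph[OF tB1] .
    have m1: "monotone_epi f B1 A" unfolding B1_def
      using contract_mono[OF gB gB1[unfolded B1_def] less.prems(3) vV uv(2,3)] .
    have cB1: "card (verts B1) = card (verts B) - 1" unfolding B1_def using uV finB by simp
    have lt: "card (verts B1) < card (verts B)" using cB1 less.prems(2) by simp
    have "verts A = f ` verts B1" using epi_vsurj[OF mono_epi[OF m1]] by simp
    then have "card (verts A) \<le> card (verts B1)" using card_image_le[of "verts B1" f] finB unfolding B1_def by simp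
    then have c2: "card (verts B1) \<ge> 2" using ap(4) by simp
    obtain D1 :: "nat graph" and f1 g1 where D1: "in_TM3 D1" "monotone_epi f1 D1 B1" "monotone_epi g1 D1 C"
      "\<forall>x\<in>verts D1. f (f1 x) = g (g1 x)"
      using less.hyps[OF lt tB1 c2 m1] by blast
    have c2': "card (verts B - {u}) \<ge> 2" using c2 unfolding B1_def by simp
    have "\<exists>(Z :: nat graph) p q. in_TM3 Z \<and> monotone_epi p Z B \<and> monotone_epi q Z D1
           \<and> (\<forall>x\<in>verts Z. cmap u v (p x) = f1 (q x))"
      using cs
    proof
      assume leaf: "\<forall>z. (u, z) \<in> edges B \<longrightarrow> z = u \<or> z = v"
      show ?thesis using step_leaf[OF less.prems(1) uv(1,2) leaf D1(1) D1(2)[unfolded B1_def] c2'] .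
    next
      assume "\<exists>\<alpha>. \<alpha> \<noteq> u \<and> \<alpha> \<noteq> v \<and> (u, \<alpha>) \<in> edges B \<and> (\<forall>z. (u, z) \<in> edges B \<longrightarrow> z = u \<or> z = v \<or> z = \<alpha>)"
      then obtain \<alpha> where al: "\<alpha> \<noteq> u" "\<alpha> \<noteq> v" "(u, \<alpha>) \<in> edges B"
        "\<forall>z. (u, z) \<in> edges B \<longrightarrow> z = u \<or> z = v \<or> z = \<alpha>" by blast
      show ?thesis using step_nonleaf[OF less.prems(1) uv(1,2) al D1(1) D1(2)[unfolded B1_def]] .
    qed
    then obtain Z :: "nat graph" and p q where Z: "in_TM3 Z" "monotone_epi p Z B" "monotone_epi q Z D1"
      "\<forall>x\<in>verts Z. cmap u v (p x) = f1 (q x)" by blast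
    have mg: "monotone_epi (\<lambda>x. g1 (q x)) Z C" using mono_comp[OF Z(3) D1(3)] .
    have fc: "f (cmap u v z) = f z" for z using uv(3) by (cases "z = u") auto
    have "\<forall>x\<in>verts Z. f (p x) = g (g1 (q x))"
    proof
      fix x assume x: "x \<in> verts Z"
      have "q x \<in> verts D1" using epi_vert[OF mono_epi[OF Z(3)] x] .
      then have "f (f1 (q x)) = g (g1 (q x))" using D1(4) by simp
      moreover have "f (p x) = f (f1 (q x))" using fc[of "p x"] Z(4) x by simp
      ultimately show "f (p x) = g (g1 (q x))" by simp
    qed
    then show ?thesis using Z(1,2) mg by blast
  qed
qed

definition A2 :: "bool graph" where "A2 = ({True, False}, UNIV)"

lemma A2_TM3: "in_TM3 A2"
proof -
  have "ltree {False} {(False, False)}" by (rule lt_single)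
  from lt_add[OF this, of False True]
  have "ltree (insert True {False}) ({(False, False)} \<union> {(False, True), (True, False), (True, True)})" by simp
  moreover have "{(False, False)} \<union> {(False, True), (True, False), (True, True)} = (UNIV :: (bool \<times> bool) set)"
    by auto
  ultimately have "ltree {True, False} UNIV" by simp
  then have t: "is_tree A2" unfolding A2_def using ltree_is_tree by blast
  have "vorder A2 a \<le> 3" for a
  proof -
    have "card {b. (a, b) \<in> edges A2 \<and> b \<noteq> a} \<le> card (UNIV :: bool set)" by (rule card_mono) auto
    then show ?thesis by (simp add: vorder_def)
  qed
  then show ?thesis using t unfolding in_TM3_def A2_def by simp
qed

lemma leaf_epi:
  fixes B :: "'b graph"
  assumes B: "in_TM3 B"
  shows "\<exists>\<chi>. monotone_epi \<chi> B A2"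
proof -
  note bp = tm3_props[OF B]
  have g: "is_graph B" using bp(2) .
  obtain p q where pq: "p \<in> verts B" "q \<in> verts B" "p \<noteq> q"
  proof -
    have "card (verts B) \<ge> 2" using bp(4) .
    then obtain p where p: "p \<in> verts B" using bp(3) by fastforce
    have "verts B - {p} \<noteq> {}"
    proof
      assume "verts B - {p} = {}"
      then have "verts B \<subseteq> {p}" by blast
      then have "card (verts B) \<le> card {p}" by (intro card_mono) auto
      then show False using bp(4) by simp
    qed
    then show ?thesis using p that by blast
  qed
  obtain l x where lx: "l \<in> verts B" "x \<in> verts B" "(l, x) \<in> edges B" "l \<noteq> x"
    "\<forall>z\<in>verts B. (l, z) \<in> edges B \<longrightarrow> z = l \<or> z = x"
    using longest_path[OF bp(1) _ tree_connected[OF bp(1)] pq] by blast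
  have nb: "\<And>z. (l, z) \<in> edges B \<Longrightarrow> z = l \<or> z = x" using lx(5) graph_V2[OF g] by blast
  define \<chi> where "\<chi> = (\<lambda>z. z = l)"
  have epi: "graph_epi \<chi> B A2"
  proof (rule graph_epiI)
    have "\<chi> l = True" "\<chi> x = False" using lx(4) unfolding \<chi>_def by auto
    then have "True \<in> \<chi> ` verts B" "False \<in> \<chi> ` verts B" using lx(1,2) by (metis imageI)+
    then show "\<chi> ` verts B = verts A2" unfolding A2_def by auto
  next
    fix a b assume "(a, b) \<in> edges B" then show "(\<chi> a, \<chi> b) \<in> edges A2" unfolding A2_def by simp
  next
    fix c d :: bool
    have ll: "(l, l) \<in> edges B" "(x, x) \<in> edges B" "(x, l) \<in> edges B"
      using graph_refl[OF g lx(1)] graph_refl[OF g lx(2)] graph_sym[OF g lx(3)] by simp_all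
    have vals: "\<chi> l = True" "\<chi> x = False" using lx(4) unfolding \<chi>_def by auto
    show "\<exists>a b. (a, b) \<in> edges B \<and> \<chi> a = c \<and> \<chi> b = d"
    proof (cases c; cases d)
      assume "c" "d" then show ?thesis using ll vals by (intro exI[of _ l] exI[of _ l]) simp
    next
      assume "c" "\<not> d" then show ?thesis using lx(3) vals by (intro exI[of _ l] exI[of _ x]) simp
    next
      assume "\<not> c" "d" then show ?thesis using ll vals by (intro exI[of _ x] exI[of _ l]) simp
    next
      assume "\<not> c" "\<not> d" then show ?thesis using ll vals by (intro exI[of _ x] exI[of _ x]) simp
    qed
  qed
  have "monotone_epi \<chi> B A2"
  proof (rule mono_of_fibres[OF g epi])
    fix y assume "y \<in> verts A2"
    show "set_connected B (\<chi> -` {y} \<inter> verts B)"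
    proof (cases y)
      case True
      then have "\<chi> -` {y} \<inter> verts B = {l}" using lx(1) unfolding \<chi>_def by auto
      then show ?thesis by (simp add: sc_single)
    next
      case False
      then have eq: "\<chi> -` {y} \<inter> verts B = verts B - {l}" unfolding \<chi>_def by auto
      let ?T = "(verts B - {l}, {e \<in> edges B. fst e \<noteq> l \<and> snd e \<noteq> l})"
      have "is_tree ?T" using leaf_remove_tree[OF bp(1) lx(1,2) lx(4)[symmetric] lx(3) nb] .
      then have "set_connected ?T (verts ?T)" by (rule tree_connected)
      then have c: "set_connected ?T (verts B - {l})" by simp
      have "set_connected B (verts B - {l})"
        by (rule sc_mono_edges[OF c]) auto
      then show ?thesis using eq by simp
    qed
  qed
  then show ?thesis by blast
qed



theorem theorem3p13:
  shows "(\<forall>(B :: 'b graph) (C :: 'c graph). in_TM3 B \<and> in_TM3 C \<longrightarrow>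
            (\<exists>(D :: nat graph) p q. in_TM3 D \<and> monotone_epi p D B \<and> monotone_epi q D C))
       \<and> (\<forall>(A :: 'a graph) (B :: 'b graph) (C :: 'c graph) f g.
            in_TM3 A \<and> in_TM3 B \<and> in_TM3 C \<and> monotone_epi f B A \<and> monotone_epi g C A \<longrightarrow>
            (\<exists>(D :: nat graph) f0 g0. in_TM3 D \<and> monotone_epi f0 D B \<and> monotone_epi g0 D C
               \<and> (\<forall>x\<in>verts D. f (f0 x) = g (g0 x))))"
proof (intro conjI allI impI)
  fix B :: "'b graph" and C :: "'c graph"
  assume BC: "in_TM3 B \<and> in_TM3 C"
  obtain \<chi>B where cB: "monotone_epi \<chi>B B A2" using leaf_epi BC by blast
  obtain \<chi>C where cC: "monotone_epi \<chi>C C A2" using leaf_epi BC by blast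
  have "is_tree B" "card (verts B) \<ge> 2" using BC unfolding in_TM3_def by auto
  then obtain D :: "nat graph" and f0 g0 where "in_TM3 D" "monotone_epi f0 D B" "monotone_epi g0 D C"
    using AP_gen[OF A2_TM3 _ cC, of B \<chi>B] BC cB by blast
  then show "\<exists>(D :: nat graph) p q. in_TM3 D \<and> monotone_epi p D B \<and> monotone_epi q D C" by blast
next
  fix A :: "'a graph" and B :: "'b graph" and C :: "'c graph" and f g
  assume h: "in_TM3 A \<and> in_TM3 B \<and> in_TM3 C \<and> monotone_epi f B A \<and> monotone_epi g C A"
  have "is_tree B" "card (verts B) \<ge> 2" using h unfolding in_TM3_def by auto
  then show "\<exists>(D :: nat graph) f0 g0. in_TM3 D \<and> monotone_epi f0 D B \<and> monotone_epi g0 D C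
               \<and> (\<forall>x\<in>verts D. f (f0 x) = g (g0 x))"
    using AP_gen[of A C g B f] h by blast
qed

end
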